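(* Let $w_1,w_2\in\mathcal T$ and let $\alpha\in F(x_1,x_2,y_1,y_2)$ be arbitrary. Then (1) $I(w_1)$ is finite; (2) $I(\alpha^{-1}w_1\alpha)=I(w_1)$; (3) $I(w_1w_2)\le I(w_1)+I(w_2)$.
   Context: Let $F_2^{(a)},F_2^{(b)},F_2^{(c)}$ be free groups on $a_1,a_2$; $b_1,b_2$; $c_1,c_2$, let $\psi\colon F_2^{(a)}\times F_2^{(b)}\times F_2^{(c)}\to\mathbb Z^2$ send $a_i,b_i,c_i\mapsto e_i$, and $K=\ker\psi$, generated by $x_i=a_ic_i^{-1}$, $y_i=b_ic_i^{-1}$. $\mathcal T\subseteq F(x_1,x_2,y_1,y_2)$ is the set of elements representing the identity of $K$. $\mathrm{Conf}_2(X)=\{(z_1,z_2)\in X^2:z_1\ne z_2\}$. For Gaussian integers $p_x,p_y$ put $\hat p_x=p_x-(\tfrac13+\tfrac13 i)$, $\hat p_y=p_y+(\tfrac13+\tfrac13i)$. For $w\in\mathcal T$ given by a word of length $\ell$, define $\gamma_x,\gamma_y\colon[0,1]\to\mathbb C$ with $\gamma_x(0)=\hat p_x$, $\gamma_y(0)=\hat p_y$, linear on each $[(k-1)/\ell,k/\ell]$: if the $k$-th letter is $x_1^\delta$ (resp. $x_2^\delta$), $\delta=\pm1$, $\gamma_x$ moves by $\delta$ (resp. $i\delta$) and $\gamma_y$ is constant; if it is $y_1^\delta$ (resp. $y_2^\delta$), $\gamma_y$ moves by $-\delta$ (resp. $-i\delta$) and $\gamma_x$ is constant. $(\gamma_x,\gamma_y)$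 is a loop in $\mathrm{Conf}_2(\mathbb C\setminus\{0\})$ based at $(\hat p_x,\hat p_y)$; $I_{p_x,p_y}(w)$ is its class in $\pi_1(\mathrm{Conf}_2(\mathbb C\setminus\{0\}),(\hat p_x,\hat p_y))$ (independent of the word; $I_{p_x,p_y}$ is a homomorphism on $\mathcal T$). The braid-invariant is $I(w)=\#\{(p_x,p_y)\in\mathbb Z[i]^2: I_{p_x,p_y}(w)\text{ is nontrivial}\}$. *)

theory Defs
  imports "HOL-Analysis.Analysis"
begin

datatype gen = X1 | X2 | Y1 | Y2

text \<open>A letter is a generator with an exponent: True means exponent +1, False means -1.
  Elements of a free group are represented by words (lists of letters).\<close>

type_synonym 'a letter = "'a \<times> bool"
type_synonym word = "gen letter list"

fun free_reduce :: "'a letter list \<Rightarrow> 'a letter list" where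
  "free_reduce [] = []"
| "free_reduce (x # xs) =
     (case free_reduce xs of
        [] \<Rightarrow> [x]
      | y # ys \<Rightarrow> (if fst y = fst x \<and> snd y \<noteq> snd x then ys else x # y # ys))"

definition word_inv :: "'a letter list \<Rightarrow> 'a letter list" where
  "word_inv w = rev (map (\<lambda>(g, b). (g, \<not> b)) w)"

text \<open>The homomorphism F(x1,x2,y1,y2) -> F2^(a) x F2^(b) x F2^(c) given by
  x_i |-> a_i c_i^{-1}, y_i |-> b_i c_i^{-1}; generators of each F2 indexed by 1,2.\<close>

fun gen_idx :: "gen \<Rightarrow> nat" where
  "gen_idx X1 = 1" | "gen_idx X2 = 2" | "gen_idx Y1 = 1" | "gen_idx Y2 = 2"

fun is_x :: "gen \<Rightarrow> bool" where
  "is_x X1 = True" | "is_x X2 = True" | "is_x Y1 = False" | "is_x Y2 = False"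

definition comp_a :: "word \<Rightarrow> nat letter list" where
  "comp_a w = map (\<lambda>(g, b). (gen_idx g, b)) (filter (\<lambda>(g, b). is_x g) w)"

definition comp_b :: "word \<Rightarrow> nat letter list" where
  "comp_b w = map (\<lambda>(g, b). (gen_idx g, b)) (filter (\<lambda>(g, b). \<not> is_x g) w)"

definition comp_c :: "word \<Rightarrow> nat letter list" where
  "comp_c w = map (\<lambda>(g, b). (gen_idx g, \<not> b)) w"

definition in_T :: "word \<Rightarrow> bool" where
  "in_T w \<longleftrightarrow> free_reduce (comp_a w) = [] \<and> free_reduce (comp_b w) = []
                 \<and> free_reduce (comp_c w) = []"

definition conf2 :: "complex set \<Rightarrow> (complex \<times> complex) set" where
  "conf2 X = {(z1, z2). z1 \<in> X \<and> z2 \<in> X \<and> z1 \<noteq> z2}"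

definition gauss_ints :: "complex set" where
  "gauss_ints = {z. Re z \<in> \<int> \<and> Im z \<in> \<int>}"

definition sgnb :: "bool \<Rightarrow> complex" where
  "sgnb b = (if b then 1 else -1)"

fun disp :: "gen letter \<Rightarrow> complex \<times> complex" where
  "disp (X1, b) = (sgnb b, 0)"
| "disp (X2, b) = (\<i> * sgnb b, 0)"
| "disp (Y1, b) = (0, - sgnb b)"
| "disp (Y2, b) = (0, - (\<i> * sgnb b))"

definition base_pt :: "complex \<Rightarrow> complex \<Rightarrow> complex \<times> complex" where
  "base_pt px py = (px - (1/3 + \<i>/3), py + (1/3 + \<i>/3))"

definition vertex :: "complex \<times> complex \<Rightarrow> word \<Rightarrow> nat \<Rightarrow> complex \<times> complex" where
  "vertex b w k = b + sum_list (map disp (take k w))"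

definition word_path :: "complex \<times> complex \<Rightarrow> word \<Rightarrow> real \<Rightarrow> complex \<times> complex" where
  "word_path b w t =
     (if w = [] then b
      else let l = length w;
               k = nat (min (int l - 1) (max 0 \<lfloor>t * real l\<rfloor>));
               s = t * real l - real k
           in vertex b w k + s *\<^sub>R disp (w ! k))"

definition I_nontrivial :: "complex \<Rightarrow> complex \<Rightarrow> word \<Rightarrow> bool" where
  "I_nontrivial px py w \<longleftrightarrow>
     \<not> homotopic_paths (conf2 (UNIV - {0})) (word_path (base_pt px py) w)
                        (\<lambda>_. base_pt px py)"

definition I_set :: "word \<Rightarrow> (complex \<times> complex) set" where
  "I_set w = {(px, py). px \<in> gauss_ints \<and> py \<in> gauss_ints \<and> I_nontrivial px py w}"

definition braid_inv :: "word \<Rightarrow> nat" where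
  "braid_inv w = card (I_set w)"

end

theory Submission
  imports Defs
begin


definition lp :: "'v::real_normed_vector \<Rightarrow> 'v list \<Rightarrow> real \<Rightarrow> 'v" where
  "lp b vs t =
     (if vs = [] then b
      else let l = length vs;
               k = nat (min (int l - 1) (max 0 \<lfloor>t * real l\<rfloor>));
               s = t * real l - real k
           in b + sum_list (take k vs) + s *\<^sub>R (vs ! k))"

lemma nat_min_lt: "w \<noteq> [] \<Longrightarrow> nat (min (int (length w) - 1) x) < length w"
  by (cases w) auto

lemma word_path_lp: "word_path b w = lp b (map disp w)"
proof (rule ext)
  fix t show "word_path b w t = lp b (map disp w) t"
    by (cases "w = []") (simp_all add: word_path_def lp_def vertex_def take_map Let_def nth_map[OF nat_min_lt])
qed

lemma lp_Nil[simp]: "lp b [] = (\<lambda>t. b)"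
  by (rule ext) (simp add: lp_def)

lemma lp_single: "lp b [v] = (\<lambda>t. b + t *\<^sub>R v)"
  by (rule ext) (simp add: lp_def)

lemma lp_char:
  assumes "vs \<noteq> []" "k < length vs" "real k \<le> t * real (length vs)" "t * real (length vs) \<le> real k + 1"
  shows "lp b vs t = b + sum_list (take k vs) + (t * real (length vs) - real k) *\<^sub>R (vs ! k)"
proof -
  let ?L = "length vs"
  define k0 where "k0 = nat (min (int ?L - 1) (max 0 \<lfloor>t * real ?L\<rfloor>))"
  have lpk: "lp b vs t = b + sum_list (take k0 vs) + (t * real ?L - real k0) *\<^sub>R (vs ! k0)"
    using assms(1) by (simp add: lp_def k0_def Let_def)
  have fl: "\<lfloor>t * real ?L\<rfloor> = int k \<or> (\<lfloor>t * real ?L\<rfloor> = int k + 1 \<and> t * real ?L = real k + 1)"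
  proof (cases "t * real ?L = real k + 1")
    case True then show ?thesis by simp
  next
    case False
    then have "t * real ?L < real k + 1" using assms by simp
    then have "\<lfloor>t * real ?L\<rfloor> = int k" using assms(3) by (simp add: floor_eq_iff)
    then show ?thesis by simp
  qed
  show ?thesis
  proof (cases "\<lfloor>t * real ?L\<rfloor> = int k")
    case True
    then have "k0 = k" using assms(2) by (simp add: k0_def)
    then show ?thesis using lpk by simp
  next
    case False
    with fl have f1: "\<lfloor>t * real ?L\<rfloor> = int k + 1" and e: "t * real ?L = real k + 1" by auto
    show ?thesis
    proof (cases "k + 1 < ?L")
      case True
      then have "k0 = k + 1" using f1 by (simp add: k0_def)
      then show ?thesis using lpk e True by (simp add: take_Suc_conv_app_nth)
    next
      case False
      then have "k0 = k" using f1 assms(2) by (simp add: k0_def)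
      then show ?thesis using lpk by simp
    qed
  qed
qed

lemma lp_form:
  assumes "vs \<noteq> []" "0 \<le> t" "t \<le> 1"
  shows "\<exists>k s. k < length vs \<and> 0 \<le> s \<and> s \<le> 1 \<and> lp b vs t = b + sum_list (take k vs) + s *\<^sub>R (vs ! k)"
proof -
  let ?L = "length vs"
  define k where "k = min (?L - 1) (nat \<lfloor>t * real ?L\<rfloor>)"
  have L0: "?L > 0" using assms by simp
  have tl: "0 \<le> t * real ?L" "t * real ?L \<le> real ?L" using assms by (auto simp: mult_left_le_one_le)
  have k1: "k < ?L" using L0 by (auto simp: k_def min_def)
  have k2: "real k \<le> t * real ?L"
  proof -
    have a: "real (nat \<lfloor>t * real ?L\<rfloor>) \<le> t * real ?L" using tl(1) by (simp add: of_nat_nat)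
    have "k \<le> nat \<lfloor>t * real ?L\<rfloor>" by (simp add: k_def)
    then have "real k \<le> real (nat \<lfloor>t * real ?L\<rfloor>)" by simp
    then show ?thesis using a by linarith
  qed
  have k3: "t * real ?L \<le> real k + 1"
  proof (cases "nat \<lfloor>t * real ?L\<rfloor> \<le> ?L - 1")
    case True
    then have "k = nat \<lfloor>t * real ?L\<rfloor>" by (simp add: k_def)
    then show ?thesis using tl by linarith
  next
    case False
    then have "k = ?L - 1" by (simp add: k_def)
    moreover have "real (?L - 1) + 1 = real ?L" using L0 by (cases vs) auto
    ultimately show ?thesis using tl(2) by simp
  qed
  show ?thesis
    apply (rule exI[of _ k], rule exI[of _ "t * real ?L - real k"])
    using lp_char[OF assms(1) k1 k2 k3] k1 k2 k3 by simp
qed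



lemma choose_k:
  assumes "0 \<le> \<tau>" "\<tau> \<le> real N" "N > 0"
  shows "\<exists>k<N. real k \<le> \<tau> \<and> \<tau> \<le> real k + 1"
proof -
  define k where "k = min (N - 1) (nat \<lfloor>\<tau>\<rfloor>)"
  have k1: "k < N" using assms by (auto simp: k_def min_def)
  have a: "real (nat \<lfloor>\<tau>\<rfloor>) \<le> \<tau>" using assms(1) by (simp add: of_nat_nat)
  have "k \<le> nat \<lfloor>\<tau>\<rfloor>" by (simp add: k_def)
  then have "real k \<le> real (nat \<lfloor>\<tau>\<rfloor>)" by simp
  then have k2: "real k \<le> \<tau>" using a by linarith
  have k3: "\<tau> \<le> real k + 1"
  proof (cases "nat \<lfloor>\<tau>\<rfloor> \<le> N - 1")
    case True
    then have "k = nat \<lfloor>\<tau>\<rfloor>" by (simp add: k_def)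
    then show ?thesis using assms(1) by linarith
  next
    case False
    then have "k = N - 1" by (simp add: k_def)
    moreover have "real (N - 1) + 1 = real N" using assms(3) by (cases N) auto
    ultimately show ?thesis using assms(2) by simp
  qed
  show ?thesis using k1 k2 k3 by blast
qed

lemma lp_app1:
  assumes "u \<noteq> []" "v \<noteq> []" "0 \<le> t" "t * real (length (u @ v)) \<le> real (length u)"
  shows "lp b (u @ v) t = lp b u (t * real (length (u @ v)) / real (length u))"
proof -
  let ?\<tau> = "t * real (length (u @ v))"
  have m0: "length u > 0" using assms by simp
  have t0: "0 \<le> ?\<tau>" using assms by simp
  obtain k where k: "k < length u" "real k \<le> ?\<tau>" "?\<tau> \<le> real k + 1"
    using choose_k[OF t0 assms(4) m0] by blast
  have kL: "k < length (u @ v)" using k by simp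
  have e: "?\<tau> / real (length u) * real (length u) = ?\<tau>" using m0 by simp
  have "lp b (u @ v) t = b + sum_list (take k (u @ v)) + (?\<tau> - real k) *\<^sub>R ((u @ v) ! k)"
    using lp_char[of "u @ v" k t b] k kL assms(1) by simp
  also have "\<dots> = b + sum_list (take k u) + (?\<tau> - real k) *\<^sub>R (u ! k)"
  proof -
    have "(u @ v) ! k = u ! k" using k by (simp add: nth_append)
    moreover have "take k (u @ v) = take k u" using k(1) by (simp add: take_append)
    ultimately show ?thesis by (simp only:)
  qed
  also have "\<dots> = lp b u (?\<tau> / real (length u))"
    using lp_char[of u k "?\<tau> / real (length u)" b] k assms(1) e by simp
  finally show ?thesis .
qed

lemma lp_app2:
  assumes "u \<noteq> []" "v \<noteq> []" "real (length u) \<le> t * real (length (u @ v))" "t \<le> 1"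
  shows "lp b (u @ v) t = lp (b + sum_list u) v ((t * real (length (u @ v)) - real (length u)) / real (length v))"
proof -
  let ?m = "real (length u)" and ?n = "real (length v)"
  let ?\<tau> = "t * real (length (u @ v)) - ?m"
  have n0: "length v > 0" using assms by simp
  have t0: "0 \<le> ?\<tau>" using assms by simp
  have "t * real (length (u @ v)) \<le> 1 * real (length (u @ v))"
    by (rule mult_right_mono) (use assms in auto)
  then have t1: "?\<tau> \<le> ?n" by simp
  obtain k where k: "k < length v" "real k \<le> ?\<tau>" "?\<tau> \<le> real k + 1"
    using choose_k[OF t0 t1 n0] by blast
  have kL: "length u + k < length (u @ v)" using k by simp
  have e: "?\<tau> / ?n * ?n = ?\<tau>" using n0 by simp
  have "lp b (u @ v) t = b + sum_list (take (length u + k) (u @ v)) + (t * real (length (u @ v)) - real (length u + k)) *\<^sub>R ((u @ v) ! (length u + k))"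
    using lp_char[of "u @ v" "length u + k" t b] k kL assms(1) by simp
  also have "\<dots> = (b + sum_list u) + sum_list (take k v) + (?\<tau> - real k) *\<^sub>R (v ! k)"
    by (simp add: nth_append algebra_simps)
  also have "\<dots> = lp (b + sum_list u) v (?\<tau> / ?n)"
    using lp_char[of v k "?\<tau> / ?n" "b + sum_list u"] k assms(2) e by simp
  finally show ?thesis .
qed

lemma lp_start[simp]: "lp b vs 0 = b"
  by (simp add: lp_def)

lemma lp_finish: "lp b vs 1 = b + sum_list vs"
proof (cases "vs = []")
  case False
  then have L: "length vs - 1 < length vs" by simp
  have r: "real (length vs - 1) + 1 = real (length vs)" using False by (cases vs) auto
  have "lp b vs 1 = b + sum_list (take (length vs - 1) vs) + (real (length vs) - real (length vs - 1)) *\<^sub>R vs ! (length vs - 1)"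
    using lp_char[OF False L, of 1 b] r by simp
  also have "\<dots> = b + sum_list vs"
  proof -
    have "vs = take (length vs - 1) vs @ [vs ! (length vs - 1)]"
      by (metis append_butlast_last_id butlast_conv_take last_conv_nth False)
    then have "sum_list vs = sum_list (take (length vs - 1) vs) + vs ! (length vs - 1)"
      by (metis sum_list_append sum_list_simps add_0_right)
    then show ?thesis using r by (simp add: add.assoc)
  qed
  finally show ?thesis .
qed simp



lemma len_pos1[simp]: "u \<noteq> [] \<Longrightarrow> 0 < real (length u) + real (length v)"
  by (simp add: add_pos_nonneg)
lemma len_pos2[simp]: "v \<noteq> [] \<Longrightarrow> 0 < real (length u) + real (length v)"
  by (simp add: add_nonneg_pos)
lemma len_ne1[simp]: "u \<noteq> [] \<Longrightarrow> real (length u) + real (length v) \<noteq> 0"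
  by (metis len_pos1 less_irrefl)
lemma len_ne2[simp]: "v \<noteq> [] \<Longrightarrow> real (length u) + real (length v) \<noteq> 0"
  by (metis len_pos2 less_irrefl)
lemma div01: "0 \<le> (a::real) \<Longrightarrow> a \<le> n \<Longrightarrow> 0 < n \<Longrightarrow> a / n \<in> {0..1}"
  by (simp add: divide_simps)

lemma path_lp_app:
  assumes "path (lp b u)" "path (lp (b + sum_list u) v)" "u \<noteq> []" "v \<noteq> []"
  shows "path (lp b (u @ v))"
proof -
  let ?L = "real (length (u @ v))" and ?m = "real (length u)" and ?n = "real (length v)"
  have L0: "?L > 0" "?m > 0" "?n > 0" using assms by auto
  let ?f = "\<lambda>t. lp b u (t * ?L / ?m)"
  let ?g = "\<lambda>t. lp (b + sum_list u) v ((t * ?L - ?m) / ?n)"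
  have cf: "continuous_on {t \<in> {0..1}. t * ?L \<le> ?m} ?f"
  proof (rule continuous_on_compose2[OF assms(1)[unfolded path_def]])
    show "continuous_on {t \<in> {0..1}. t * ?L \<le> ?m} (\<lambda>t. t * ?L / ?m)" using L0 by (intro continuous_intros) auto
    show "(\<lambda>t. t * ?L / ?m) ` {t \<in> {0..1}. t * ?L \<le> ?m} \<subseteq> {0..1}"
      using L0 by (auto simp: divide_simps)
  qed
  have cg: "continuous_on {t \<in> {0..1}. ?m \<le> t * ?L} ?g"
  proof (rule continuous_on_compose2[OF assms(2)[unfolded path_def]])
    show "continuous_on {t \<in> {0..1}. ?m \<le> t * ?L} (\<lambda>t. (t * ?L - ?m) / ?n)" using L0 by (intro continuous_intros) auto
    show "(\<lambda>t. (t * ?L - ?m) / ?n) ` {t \<in> {0..1}. ?m \<le> t * ?L} \<subseteq> {0..1}"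
    proof (rule image_subsetI)
      fix t :: real assume "t \<in> {t \<in> {0..1}. ?m \<le> t * ?L}"
      then have t: "0 \<le> t" "t \<le> 1" "?m \<le> t * ?L" by auto
      have "t * ?L \<le> 1 * ?L" by (rule mult_right_mono) (use t in auto)
      moreover have "?L = ?m + ?n" by simp
      ultimately show "(t * ?L - ?m) / ?n \<in> {0..1}" using t L0 by (intro div01) linarith+
    qed
  qed
  have c: "continuous_on {0..1} (\<lambda>t. if t * ?L \<le> ?m then ?f t else ?g t)"
  proof (rule continuous_on_cases_le[OF cf cg])
    show "continuous_on {0..1} (\<lambda>t. t * ?L)" by (intro continuous_intros)
    fix t :: real assume "t \<in> {0..1}" "t * ?L = ?m"
    then show "?f t = ?g t" using L0 lp_finish[of b u] by simp
  qed
  show ?thesis unfolding path_def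
  proof (rule continuous_on_eq[OF c])
    fix t :: real assume t: "t \<in> {0..1}"
    show "(if t * ?L \<le> ?m then ?f t else ?g t) = lp b (u @ v) t"
      using lp_app1[OF assms(3,4), of t b] lp_app2[OF assms(3,4), of t b] t by auto
  qed
qed

lemma path_lp[simp]: "path (lp b vs)"
proof (induction vs arbitrary: b)
  case Nil then show ?case by (simp add: path_def)
next
  case (Cons v r)
  have p1: "path (lp b [v])" unfolding lp_single path_def by (intro continuous_intros)
  show ?case
  proof (cases "r = []")
    case True then show ?thesis using p1 by simp
  next
    case False
    then show ?thesis using path_lp_app[of b "[v]" r] p1 Cons.IH by simp
  qed
qed

lemma pathstart_lp[simp]: "pathstart (lp b vs) = b"
  by (simp add: pathstart_def)

lemma pathfinish_lp[simp]: "pathfinish (lp b vs) = b + sum_list vs"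
  by (simp add: pathfinish_def lp_finish)

lemma lp_image_app1: "path_image (lp b u) \<subseteq> path_image (lp b (u @ v))"
proof (cases "u = [] \<or> v = []")
  case True
  then show ?thesis
  proof
    assume "u = []"
    then show ?thesis using pathstart_in_path_image[of "lp b v"] by (auto simp: path_image_def)
  qed simp
next
  case False
  then have uv: "u \<noteq> []" "v \<noteq> []" by auto
  let ?L = "real (length (u @ v))" and ?m = "real (length u)"
  have L0: "?L > 0" "?m > 0" "?m \<le> ?L" using uv by auto
  show ?thesis unfolding path_image_def
  proof
    fix z assume "z \<in> lp b u ` {0..1}"
    then obtain s where s: "s \<in> {0..1}" "z = lp b u s" by auto
    let ?t = "s * ?m / ?L"
    have t01: "?t \<in> {0..1}" using s L0 by (auto simp: divide_simps mult_left_le_one_le intro: order.trans[of _ ?m])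
    have "?t * ?L \<le> ?m" using s L0 by (simp add: mult_left_le_one_le)
    then have "lp b (u @ v) ?t = lp b u (?t * ?L / ?m)"
      using lp_app1[OF uv, of ?t b] t01 by simp
    also have "?t * ?L / ?m = s" using L0 by simp
    finally show "z \<in> lp b (u @ v) ` {0..1}" using s t01 by (metis image_eqI)
  qed
qed

lemma lp_image_app2: "path_image (lp (b + sum_list u) v) \<subseteq> path_image (lp b (u @ v))"
proof (cases "u = [] \<or> v = []")
  case True
  then show ?thesis
  proof
    assume "v = []"
    then show ?thesis using pathfinish_in_path_image[of "lp b u"] by (auto simp: path_image_def)
  qed simp
next
  case False
  then have uv: "u \<noteq> []" "v \<noteq> []" by auto
  let ?L = "real (length (u @ v))" and ?m = "real (length u)" and ?n = "real (length v)"
  have L0: "?L > 0" "?m > 0" "?n > 0" "?L = ?m + ?n" using uv by auto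
  show ?thesis unfolding path_image_def
  proof
    fix z assume "z \<in> lp (b + sum_list u) v ` {0..1}"
    then obtain s where s: "s \<in> {0..1}" "z = lp (b + sum_list u) v s" by auto
    let ?t = "(?m + s * ?n) / ?L"
    have "s * ?n \<le> ?n" using s L0 by (simp add: mult_left_le_one_le)
    then have t01: "?t \<in> {0..1}" using s L0 by (auto simp: divide_simps)
    have "?m \<le> ?t * ?L" using s L0 by simp
    then have "lp b (u @ v) ?t = lp (b + sum_list u) v ((?t * ?L - ?m) / ?n)"
      using lp_app2[OF uv, of ?t b] t01 by simp
    also have "(?t * ?L - ?m) / ?n = s" using L0 by simp
    finally show "z \<in> lp b (u @ v) ` {0..1}" using s t01 by (metis image_eqI)
  qed
qed

lemma lp_eq_join:
  assumes "u \<noteq> []" "v \<noteq> []" "t \<in> {0..1}"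
  defines "f \<equiv> \<lambda>t. if t * real (length (u @ v)) \<le> real (length u)
                    then t * real (length (u @ v)) / (2 * real (length u))
                    else 1/2 + (t * real (length (u @ v)) - real (length u)) / (2 * real (length v))"
  shows "lp b (u @ v) t = (lp b u +++ lp (b + sum_list u) v) (f t)"
proof -
  let ?L = "real (length (u @ v))" and ?m = "real (length u)" and ?n = "real (length v)"
  have L0: "?L > 0" "?m > 0" "?n > 0" using assms by auto
  show ?thesis
  proof (cases "t * ?L \<le> ?m")
    case True
    then have "f t \<le> 1/2" using L0 by (simp add: f_def divide_simps)
    then show ?thesis using True lp_app1[OF assms(1,2), of t b] assms(3) L0 by (simp add: joinpaths_def f_def)
  next
    case False
    then have "\<not> f t \<le> 1/2" using L0 by (simp add: f_def divide_simps)
    moreover have "2 * f t - 1 = (t * ?L - ?m) / ?n" using False L0 by (simp add: f_def divide_simps)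
    ultimately show ?thesis using False lp_app2[OF assms(1,2), of t b] assms(3) L0 by (simp add: joinpaths_def)
  qed
qed

lemma lp_append_homotopic:
  assumes "path_image (lp b (u @ v)) \<subseteq> S"
  shows "homotopic_paths S (lp b (u @ v)) (lp b u +++ lp (b + sum_list u) v)"
proof -
  have iu: "path_image (lp b u) \<subseteq> S" using lp_image_app1 assms by blast
  have iv: "path_image (lp (b + sum_list u) v) \<subseteq> S" using lp_image_app2 assms by blast
  show ?thesis
  proof (cases "u = []")
    case True
    then show ?thesis using homotopic_paths_lid[of "lp b v" S, THEN homotopic_paths_sym] iv
      by (simp add: linepath_refl)
  next
    case u: False
    show ?thesis
    proof (cases "v = []")
      case True
      then show ?thesis using homotopic_paths_rid[of "lp b u" S, THEN homotopic_paths_sym] iu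
        by (simp add: linepath_refl)
    next
      case v: False
      let ?L = "real (length (u @ v))" and ?m = "real (length u)" and ?n = "real (length v)"
      have L0: "?L > 0" "?m > 0" "?n > 0" "?L = ?m + ?n" using u v by auto
      define f where "f \<equiv> \<lambda>t. if t * real (length (u @ v)) \<le> real (length u)
                    then t * real (length (u @ v)) / (2 * real (length u))
                    else 1/2 + (t * real (length (u @ v)) - real (length u)) / (2 * real (length v))"
      show ?thesis
      proof (rule homotopic_paths_sym, rule homotopic_paths_reparametrize[where f = f])
        show "path (lp b u +++ lp (b + sum_list u) v)" by simp
        show "path_image (lp b u +++ lp (b + sum_list u) v) \<subseteq> S"
          using iu iv by (metis path_image_join pathfinish_lp pathstart_lp Un_subset_iff)
        show "continuous_on {0..1} f" unfolding f_def
          by (rule continuous_on_cases_le) (use L0 in \<open>auto intro!: continuous_intros simp: divide_simps\<close>)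
        show "f \<in> {0..1} \<rightarrow> {0..1}"
        proof
          fix t :: real assume t: "t \<in> {0..1}"
          have tL: "t * ?L \<le> ?L" "0 \<le> t * ?L" using t L0 by (simp_all add: mult_left_le_one_le)
          show "f t \<in> {0..1}"
          proof (cases "t * ?L \<le> ?m")
            case True
            then have "f t = t * ?L / (2 * ?m)" by (simp add: f_def)
            moreover have "t * ?L / (2 * ?m) \<le> 1" using True L0 by (simp add: divide_simps)
            moreover have "0 \<le> t * ?L / (2 * ?m)" using tL L0 by simp
            ultimately show ?thesis by simp
          next
            case False
            then have ft: "f t = 1/2 + (t * ?L - ?m) / (2 * ?n)" by (simp add: f_def)
            have "(t * ?L - ?m) / ?n \<in> {0..1}" using tL L0 False by (intro div01) linarith+
            then have A: "0 \<le> (t * ?L - ?m) / ?n" "(t * ?L - ?m) / ?n \<le> 1" by (simp_all only: atLeastAtMost_iff)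
            have e2: "(t * ?L - ?m) / (2 * ?n) = ((t * ?L - ?m) / ?n) / 2" by (simp add: mult.commute)
            have "(t * ?L - ?m) / (2 * ?n) \<le> 1/2" "0 \<le> (t * ?L - ?m) / (2 * ?n)" using A e2 by linarith+
            then show ?thesis unfolding ft atLeastAtMost_iff by linarith
          qed
        qed
        show "f 0 = 0" by (simp add: f_def)
        show "f 1 = 1" using L0 by (simp add: f_def divide_simps)
        show "\<And>t. t \<in> {0..1} \<Longrightarrow> lp b (u @ v) t = (lp b u +++ lp (b + sum_list u) v) (f t)"
          using lp_eq_join[OF u v] unfolding f_def by blast
      qed
    qed
  qed
qed



lemma lp_lin:
  fixes L :: "'a::real_normed_vector \<Rightarrow> 'b::real_normed_vector"
  assumes add: "\<And>x y. L (x + y) = L x + L y" and sc: "\<And>c x. L (c *\<^sub>R x) = c *\<^sub>R L x"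
  shows "L (lp b vs t) = lp (L b) (map L vs) t"
proof -
  have z: "L 0 = 0" using sc[of 0 0] by simp
  have sl: "\<And>xs. L (sum_list xs) = sum_list (map L xs)"
  proof -
    fix xs show "L (sum_list xs) = sum_list (map L xs)" by (induction xs) (simp_all add: z add)
  qed
  show ?thesis
    by (cases "vs = []") (simp_all add: lp_def Let_def add sc sl take_map nth_map[OF nat_min_lt])
qed

lemma lp_fst: "fst (lp b vs t) = lp (fst b) (map fst vs) t"
  by (rule lp_lin) auto
lemma lp_snd: "snd (lp b vs t) = lp (snd b) (map snd vs) t"
  by (rule lp_lin) auto
lemma lp_dif: "fst (lp b vs t) - snd (lp b vs t) = lp (fst b - snd b) (map (\<lambda>p. fst p - snd p) vs) t"
  using lp_lin[of "\<lambda>p::'a::real_normed_vector \<times> 'a. fst p - snd p" b vs t] by (simp add: algebra_simps)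

lemma norm_sum_list_le: "(\<And>v. v \<in> set vs \<Longrightarrow> norm v \<le> 1) \<Longrightarrow> norm (sum_list vs) \<le> real (length vs)"
proof (induction vs)
  case Nil then show ?case by simp
next
  case (Cons v r)
  have "norm (sum_list (v # r)) \<le> norm v + norm (sum_list r)" by (simp add: norm_triangle_ineq)
  also have "\<dots> \<le> 1 + real (length r)" using Cons by (intro add_mono) auto
  finally show ?case by simp
qed

lemma lp_norm_bound:
  assumes "\<And>v. v \<in> set vs \<Longrightarrow> norm v \<le> 1" "0 \<le> t" "t \<le> 1"
  shows "norm (lp b vs t - b) \<le> real (length vs)"
proof (cases "vs = []")
  case False
  obtain k s where ks: "k < length vs" "0 \<le> s" "s \<le> 1" "lp b vs t = b + sum_list (take k vs) + s *\<^sub>R (vs ! k)"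
    using lp_form[OF False assms(2,3)] by blast
  have "norm (lp b vs t - b) \<le> norm (sum_list (take k vs)) + norm (s *\<^sub>R (vs ! k))"
    using ks(4) by (simp add: norm_triangle_ineq del: norm_scaleR)
  also have "\<dots> \<le> real k + 1"
  proof (rule add_mono)
    show "norm (sum_list (take k vs)) \<le> real k"
      using norm_sum_list_le[of "take k vs"] assms(1) ks(1) by (auto dest: in_set_takeD)
    have "norm (vs ! k) \<le> 1" using assms(1) ks(1) by simp
    then show "norm (s *\<^sub>R (vs ! k)) \<le> 1" using ks(2,3) by (simp add: mult_le_one)
  qed
  also have "\<dots> \<le> real (length vs)" using ks(1) by simp
  finally show ?thesis .
qed simp

lemma lp_vertex_C:
  assumes "\<And>c v. c \<in> C \<Longrightarrow> v \<in> V \<Longrightarrow> c + v \<in> C"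
  shows "b \<in> C \<Longrightarrow> set vs \<subseteq> V \<Longrightarrow> b + sum_list vs \<in> C"
proof (induction vs arbitrary: b)
  case Nil then show ?case by simp
next
  case (Cons v r)
  have "b + v \<in> C" using Cons.prems assms by simp
  then have "(b + v) + sum_list r \<in> C" using Cons by simp
  then show ?case by (simp add: add.assoc)
qed

lemma lp_track:
  assumes cl: "\<And>c v. c \<in> C \<Longrightarrow> v \<in> V \<Longrightarrow> c + v \<in> C"
    and seg: "\<And>c v s. c \<in> C \<Longrightarrow> v \<in> V \<Longrightarrow> 0 \<le> s \<Longrightarrow> s \<le> 1 \<Longrightarrow> c + s *\<^sub>R v \<in> T"
    and CT: "C \<subseteq> T" and b: "b \<in> C" and vs: "set vs \<subseteq> V"
  shows "path_image (lp b vs) \<subseteq> T"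
proof (cases "vs = []")
  case True then show ?thesis using b CT by (auto simp: path_image_def)
next
  case False
  show ?thesis unfolding path_image_def
  proof
    fix z assume "z \<in> lp b vs ` {0..1}"
    then obtain t where t: "0 \<le> t" "t \<le> 1" "z = lp b vs t" by auto
    obtain k s where ks: "k < length vs" "0 \<le> s" "s \<le> 1" "lp b vs t = b + sum_list (take k vs) + s *\<^sub>R (vs ! k)"
      using lp_form[OF False t(1,2)] by blast
    have "b + sum_list (take k vs) \<in> C"
      using lp_vertex_C[OF cl b, where vs = "take k vs"] vs by (meson order.trans set_take_subset)
    moreover have "vs ! k \<in> V" using vs ks(1) by auto
    ultimately show "z \<in> T" using seg ks t by simp
  qed
qed

lemma lp_lift:
  assumes "homotopic_paths S (lp c q) (lp c q')" "c = b + sum_list p"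
    "path_image (lp b (p @ q)) \<subseteq> S" "path_image (lp b (p @ q')) \<subseteq> S"
  shows "homotopic_paths S (lp b (p @ q)) (lp b (p @ q'))"
proof -
  have ip: "path_image (lp b p) \<subseteq> S" using lp_image_app1 assms(3) by blast
  have "homotopic_paths S (lp b (p @ q)) (lp b p +++ lp c q)"
    using lp_append_homotopic[OF assms(3)] assms(2) by simp
  also have "homotopic_paths S \<dots> (lp b p +++ lp c q')"
    by (rule homotopic_paths_join) (use assms(1,2) ip in simp_all)
  also have "homotopic_paths S \<dots> (lp b (p @ q'))"
    using lp_append_homotopic[OF assms(4)] assms(2) by (simp add: homotopic_paths_sym)
  finally show ?thesis .
qed



locale trk =
  fixes C :: "'v::real_normed_vector set" and V :: "'v set" and T :: "'v set"
  assumes cl: "\<And>c v. c \<in> C \<Longrightarrow> v \<in> V \<Longrightarrow> c + v \<in> C"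
    and img: "\<And>c vs. c \<in> C \<Longrightarrow> set vs \<subseteq> V \<Longrightarrow> path_image (lp c vs) \<subseteq> T"
    and neg: "\<And>v. v \<in> V \<Longrightarrow> - v \<in> V"
begin

lemma path_const'[simp]: "path (\<lambda>x. b)" by (simp add: path_def)

lemma CT: "c \<in> C \<Longrightarrow> c \<in> T"
  using img[of c "[]"] by (simp add: path_image_def)

lemma sumC: "b \<in> C \<Longrightarrow> set vs \<subseteq> V \<Longrightarrow> b + sum_list vs \<in> C"
  using lp_vertex_C[of C V b vs] cl by blast

lemma single_rev: "lp (c + v) [- v] = reversepath (lp c [v])"
  by (rule ext) (simp add: lp_single reversepath_def algebra_simps)

lemma cancel:
  assumes c: "c \<in> C" and v: "v \<in> V" and r: "set r \<subseteq> V"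
  shows "homotopic_paths T (lp c (v # - v # r)) (lp c r)"
proof -
  have vv: "set [v, -v] \<subseteq> V" using v neg by simp
  have i1: "path_image (lp c ([v, - v] @ r)) \<subseteq> T" using img[OF c] vv r by simp
  have "homotopic_paths T (lp c ([v, - v] @ r)) (lp c [v, -v] +++ lp c r)"
    using lp_append_homotopic[OF i1] by simp
  also have "homotopic_paths T \<dots> (linepath c c +++ lp c r)"
  proof (rule homotopic_paths_join)
    have i2: "path_image (lp c ([v] @ [- v])) \<subseteq> T" using img[OF c] vv by simp
    have "homotopic_paths T (lp c ([v] @ [- v])) (lp c [v] +++ lp (c + v) [-v])"
      using lp_append_homotopic[OF i2] by simp
    also have "lp c [v] +++ lp (c + v) [-v] = lp c [v] +++ reversepath (lp c [v])"
      by (simp add: single_rev)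
    also have "homotopic_paths T \<dots> (linepath c c)"
      using homotopic_paths_rinv[of "lp c [v]" T] img[OF c, of "[v]"] v by simp
    finally show "homotopic_paths T (lp c [v, - v]) (linepath c c)" by simp
    show "homotopic_paths T (lp c r) (lp c r)" using img[OF c r] by simp
  qed simp
  also have "homotopic_paths T \<dots> (lp c r)"
    using homotopic_paths_lid[of "lp c r" T] img[OF c r] by simp
  finally show ?thesis by simp
qed

lemma reduce:
  fixes f :: "'c letter \<Rightarrow> 'v"
  assumes fV: "\<And>x. f x \<in> V" and finv: "\<And>a e. f (a, \<not> e) = - f (a, e)"
  shows "b \<in> C \<Longrightarrow> homotopic_paths T (lp b (map f u)) (lp b (map f (free_reduce u)))"
proof (induction u arbitrary: b)
  case Nil then show ?case using CT[OF Nil] by simp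
next
  case (Cons x xs)
  let ?c = "b + f x"
  have c: "?c \<in> C" using cl Cons.prems fV by blast
  have sV: "\<And>ys. set (map f ys) \<subseteq> V" using fV by auto
  have ia: "path_image (lp b ([f x] @ map f ys)) \<subseteq> T" for ys
  proof -
    have "set ([f x] @ map f ys) \<subseteq> V" using fV by auto
    then show ?thesis by (rule img[OF Cons.prems])
  qed
  have step1: "homotopic_paths T (lp b ([f x] @ map f xs)) (lp b ([f x] @ map f (free_reduce xs)))"
    by (rule lp_lift[OF Cons.IH[OF c] _ ia ia]) simp
  show ?case
  proof (cases "free_reduce xs")
    case Nil
    then show ?thesis using step1 by simp
  next
    case (Cons y ys)
    show ?thesis
    proof (cases "fst y = fst x \<and> snd y \<noteq> snd x")
      case True
      then have "y = (fst x, \<not> snd x)" by (cases y) auto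
      then have fy: "f y = - f x" using finv[of "fst x" "snd x"] by simp
      have fr: "free_reduce (x # xs) = ys" using Cons True by simp
      have h2: "homotopic_paths T (lp b (f x # - f x # map f ys)) (lp b (map f ys))"
        by (rule cancel) (use Cons.prems fV sV in auto)
      have h1: "homotopic_paths T (lp b (map f (x # xs))) (lp b (f x # - f x # map f ys))"
        using step1 Cons fy by simp
      show ?thesis unfolding fr by (rule homotopic_paths_trans[OF h1 h2])
    next
      case False
      then have "free_reduce (x # xs) = x # y # ys" using Cons by simp
      then show ?thesis using step1 Cons by simp
    qed
  qed
qed

lemma zero_remove:
  shows "b \<in> C \<Longrightarrow> set vs \<subseteq> V \<Longrightarrow> homotopic_paths T (lp b vs) (lp b (filter (\<lambda>v. v \<noteq> 0) vs))"
proof (induction vs arbitrary: b)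
  case Nil then show ?case using CT[OF Nil(1)] by simp
next
  case (Cons v r)
  show ?case
  proof (cases "v = 0")
    case True
    have i1: "path_image (lp b ([0] @ r)) \<subseteq> T" using img[OF Cons.prems(1)] Cons.prems True by simp
    have "homotopic_paths T (lp b ([0] @ r)) (lp b [0] +++ lp b r)"
      using lp_append_homotopic[OF i1] by simp
    also have "lp b [0] = linepath b b" by (simp add: lp_single linepath_refl)
    also have "homotopic_paths T (linepath b b +++ lp b r) (lp b r)"
      using homotopic_paths_lid[of "lp b r" T] img[OF Cons.prems(1)] Cons.prems by simp
    also have "homotopic_paths T (lp b r) (lp b (filter (\<lambda>v. v \<noteq> 0) r))"
      using Cons by simp
    finally show ?thesis using True by simp
  next
    case False
    have c: "b + v \<in> C" using cl Cons.prems by simp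
    have ia: "path_image (lp b ([v] @ ys)) \<subseteq> T" if "set ys \<subseteq> V" for ys
    proof -
      have "set ([v] @ ys) \<subseteq> V" using that Cons.prems by auto
      then show ?thesis by (rule img[OF Cons.prems(1)])
    qed
    have "homotopic_paths T (lp b ([v] @ r)) (lp b ([v] @ filter (\<lambda>v. v \<noteq> 0) r))"
      by (rule lp_lift[OF Cons.IH[OF c] _ ia ia]) (use Cons.prems(2) in \<open>simp_all add: subset_iff\<close>)
    then show ?thesis using False by simp
  qed
qed

lemma sum_neg: "sum_list (map uminus vs) = - sum_list (vs :: 'v list)"
  by (induction vs) simp_all

lemma reverse:
  shows "b \<in> C \<Longrightarrow> set vs \<subseteq> V \<Longrightarrow>
    homotopic_paths T (lp b (rev (map uminus vs))) (reversepath (lp (b - sum_list vs) vs))"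
proof (induction vs arbitrary: b)
  case Nil then show ?case using CT[OF Nil(1)] by (simp add: reversepath_def)
next
  case (Cons v r)
  let ?c' = "b - sum_list r" and ?c = "b - sum_list (v # r)"
  have nr: "set (rev (map uminus r)) \<subseteq> V" using Cons.prems neg by auto
  have c': "?c' \<in> C" using sumC[OF Cons.prems(1), of "map uminus r"] Cons.prems neg by (auto simp: sum_neg)
  have c0: "b + sum_list (map uminus (v # r)) \<in> C" using sumC[OF Cons.prems(1), of "map uminus (v # r)"] Cons.prems neg by auto
  have e: "b + sum_list (map uminus (v # r)) = ?c" unfolding sum_neg by simp
  from c0 have c: "?c \<in> C" by (simp only: e)
  have cc: "?c + v = ?c'" by simp
  have i1: "path_image (lp b (rev (map uminus r) @ [- v])) \<subseteq> T"
    using img[OF Cons.prems(1)] nr Cons.prems neg by auto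
  have "homotopic_paths T (lp b (rev (map uminus r) @ [- v])) (lp b (rev (map uminus r)) +++ lp ?c' [-v])"
    using lp_append_homotopic[OF i1] by (simp add: sum_neg rev_map[symmetric])
  also have "homotopic_paths T \<dots> (reversepath (lp ?c' r) +++ reversepath (lp ?c [v]))"
  proof (rule homotopic_paths_join)
    show "homotopic_paths T (lp b (rev (map uminus r))) (reversepath (lp ?c' r))"
      using Cons by simp
    have "lp ?c' [-v] = reversepath (lp ?c [v])" using single_rev[of ?c v] cc by simp
    then show "homotopic_paths T (lp ?c' [-v]) (reversepath (lp ?c [v]))"
      using img[OF c', of "[-v]"] Cons.prems neg by simp
  qed (simp add: sum_neg rev_map[symmetric])
  also have "reversepath (lp ?c' r) +++ reversepath (lp ?c [v]) = reversepath (lp ?c [v] +++ lp ?c' r)"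
    by (rule reversepath_joinpaths[symmetric]) simp
  also have "homotopic_paths T \<dots> (reversepath (lp ?c ([v] @ r)))"
  proof (rule homotopic_paths_reversepath_D, rule homotopic_paths_sym)
    have i2: "path_image (lp ?c ([v] @ r)) \<subseteq> T" using img[OF c] Cons.prems by simp
    show "homotopic_paths T (lp ?c ([v] @ r)) (lp ?c [v] +++ lp ?c' r)"
      using lp_append_homotopic[OF i2] cc by simp
  qed
  finally show ?case by simp
qed

end



definition on :: "real \<Rightarrow> complex \<Rightarrow> bool" where
  "on a z \<longleftrightarrow> Re z + a \<in> \<int> \<and> Im z + a \<in> \<int>"
definition tr :: "real \<Rightarrow> complex \<Rightarrow> bool" where
  "tr a z \<longleftrightarrow> Re z + a \<in> \<int> \<or> Im z + a \<in> \<int>"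

definition V1 :: "complex set" where "V1 = {0, 1, -1, \<i>, -\<i>}"

lemma third_gen:
  fixes r :: real and m :: int
  assumes "3 * r = of_int m" "\<not> (3 dvd m)"
  shows "r \<notin> \<int>"
proof
  assume "r \<in> \<int>" then obtain n where "r = of_int n" by (auto elim: Ints_cases)
  then have "of_int (3 * n) = (of_int m :: real)" using assms(1) by simp
  then have "3 * n = m" by (simp only: of_int_eq_iff)
  then show False using assms(2) by auto
qed

lemma third_not_int: "(1/3::real) \<notin> \<int>" "(-1/3::real) \<notin> \<int>" "(2/3::real) \<notin> \<int>" "(-2/3::real) \<notin> \<int>"
proof -
  show "(1/3::real) \<notin> \<int>" by (rule third_gen[where m = 1]) simp_all
  show "(-1/3::real) \<notin> \<int>" by (rule third_gen[where m = "-1"]) simp_all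
  show "(2/3::real) \<notin> \<int>" by (rule third_gen[where m = 2]) simp_all
  show "(-2/3::real) \<notin> \<int>" by (rule third_gen[where m = "-2"]) simp_all
qed

lemma tr_nz: "tr a z \<Longrightarrow> a \<notin> \<int> \<Longrightarrow> z \<noteq> 0"
  by (auto simp: tr_def)

lemma on_tr: "on a z \<Longrightarrow> tr a z" by (auto simp: on_def tr_def)

lemma on_tr_diff: "on a z \<Longrightarrow> tr c z \<Longrightarrow> a - c \<in> \<int>"
proof -
  assume "on a z" "tr c z"
  then show ?thesis unfolding on_def tr_def
    by (metis Ints_diff add_diff_cancel_left add_diff_cancel_left' diff_diff_eq2)
qed

lemma V1_cases: "v \<in> V1 \<Longrightarrow> (Im v = 0 \<and> Re v \<in> \<int>) \<or> (Re v = 0 \<and> Im v \<in> \<int>)"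
  by (auto simp: V1_def)

lemma on_step: "on a c \<Longrightarrow> v \<in> V1 \<Longrightarrow> on a (c + v)"
proof -
  assume a: "on a c" "v \<in> V1"
  have e1: "Re (c + v) + a = (Re c + a) + Re v" "Im (c + v) + a = (Im c + a) + Im v" by simp_all
  show ?thesis using V1_cases[OF a(2)] a(1) unfolding on_def e1 by auto
qed

lemma tr_step: "on a c \<Longrightarrow> v \<in> V1 \<Longrightarrow> tr a (c + s *\<^sub>R v)"
  using V1_cases[of v] unfolding on_def tr_def by auto

lemma V1_neg: "v \<in> V1 \<Longrightarrow> - v \<in> V1" by (auto simp: V1_def)

lemma V1_norm: "v \<in> V1 \<Longrightarrow> norm v \<le> 1" by (auto simp: V1_def)

interpretation tr1: trk "Collect (on a)" V1 "Collect (tr a)" for a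
proof
  show "\<And>c v. c \<in> Collect (on a) \<Longrightarrow> v \<in> V1 \<Longrightarrow> c + v \<in> Collect (on a)" using on_step by auto
  show "\<And>v. v \<in> V1 \<Longrightarrow> - v \<in> V1" by (rule V1_neg)
  fix c vs assume "c \<in> Collect (on a)" "set vs \<subseteq> V1"
  then show "path_image (lp c vs) \<subseteq> Collect (tr a)"
    by (intro lp_track[where C = "Collect (on a)" and V = V1]) (auto intro: on_step tr_step on_tr)
qed



definition C2 :: "(complex \<times> complex) set" where
  "C2 = {p. on (1/3) (fst p) \<and> on (-1/3) (snd p)}"
abbreviation T2 :: "(complex \<times> complex) set" where "T2 \<equiv> conf2 (UNIV - {0})"

lemma sgnb_V1: "sgnb e \<in> V1" "\<i> * sgnb e \<in> V1" "- sgnb e \<in> V1" "- (\<i> * sgnb e) \<in> V1"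
  by (auto simp: sgnb_def V1_def)

lemma sgnb_neg[simp]: "sgnb (\<not> e) = - sgnb e" by (simp add: sgnb_def)
lemma sgnb_nz[simp]: "sgnb e \<noteq> 0" by (simp add: sgnb_def)

lemma disp_cases:
  "(is_x (fst a) \<and> snd (disp a) = 0 \<and> fst (disp a) \<in> V1 \<and> fst (disp a) \<noteq> 0) \<or>
   (\<not> is_x (fst a) \<and> fst (disp a) = 0 \<and> snd (disp a) \<in> V1 \<and> snd (disp a) \<noteq> 0)"
proof -
  obtain g e where a: "a = (g, e)" by (cases a)
  show ?thesis unfolding a by (cases g) (simp_all add: sgnb_V1)
qed

lemma disp_neg: "disp (g, \<not> e) = - disp (g, e)"
  by (cases g) simp_all

lemma V2_neg: "v \<in> range disp \<Longrightarrow> - v \<in> range disp"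
proof -
  assume "v \<in> range disp" then obtain g e where "v = disp (g, e)" by auto
  then have "- v = disp (g, \<not> e)" by (simp add: disp_neg)
  then show ?thesis by simp
qed

lemma C2_step: "c \<in> C2 \<Longrightarrow> v \<in> range disp \<Longrightarrow> c + v \<in> C2"
proof -
  assume c: "c \<in> C2" and "v \<in> range disp"
  then obtain a where v: "v = disp a" by auto
  show ?thesis using disp_cases[of a] c unfolding v C2_def
    by (auto intro: on_step)
qed

lemma C2_seg: "c \<in> C2 \<Longrightarrow> v \<in> range disp \<Longrightarrow> c + s *\<^sub>R v \<in> T2"
proof -
  assume c: "c \<in> C2" and "v \<in> range disp"
  then obtain a where v: "v = disp a" by auto
  have cx: "on (1/3) (fst c)" and cy: "on (-1/3) (snd c)" using c by (auto simp: C2_def)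
  have nx: "fst c \<noteq> 0" using tr_nz[OF on_tr[OF cx]] third_not_int by auto
  have ny: "snd c \<noteq> 0" using tr_nz[OF on_tr[OF cy]] third_not_int by auto
  consider "snd v = 0" "fst v \<in> V1" | "fst v = 0" "snd v \<in> V1" using disp_cases[of a] v by auto
  then show ?thesis
  proof cases
    case 1
    have t: "tr (1/3) (fst c + s *\<^sub>R fst v)" by (rule tr_step[OF cx 1(2)])
    have n1: "fst c + s *\<^sub>R fst v \<noteq> 0" using tr_nz[OF t] third_not_int by auto
    have n2: "fst c + s *\<^sub>R fst v \<noteq> snd c"
    proof
      assume e: "fst c + s *\<^sub>R fst v = snd c"
      have "-1/3 - 1/3 \<in> (\<int>::real set)" using on_tr_diff[OF cy t[unfolded e]] by simp
      then show False using third_not_int by simp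
    qed
    show ?thesis using n1 n2 ny 1 by (simp add: conf2_def case_prod_beta)
  next
    case 2
    have t: "tr (-1/3) (snd c + s *\<^sub>R snd v)" by (rule tr_step[OF cy 2(2)])
    have n1: "snd c + s *\<^sub>R snd v \<noteq> 0" using tr_nz[OF t] third_not_int by auto
    have n2: "fst c \<noteq> snd c + s *\<^sub>R snd v"
    proof
      assume e: "fst c = snd c + s *\<^sub>R snd v"
      have "1/3 - (-1/3) \<in> (\<int>::real set)" using on_tr_diff[OF cx t[folded e]] by simp
      then show False using third_not_int by simp
    qed
    show ?thesis using n1 n2 nx 2 by (simp add: conf2_def case_prod_beta)
  qed
qed

interpretation tr2: trk C2 "range disp" T2
proof
  show "\<And>c v. c \<in> C2 \<Longrightarrow> v \<in> range disp \<Longrightarrow> c + v \<in> C2" by (rule C2_step)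
  show "\<And>v. v \<in> range disp \<Longrightarrow> - v \<in> range disp" by (rule V2_neg)
  fix c vs assume "c \<in> C2" "set vs \<subseteq> range disp"
  then show "path_image (lp c vs) \<subseteq> T2"
  proof (intro lp_track[where C = C2 and V = "range disp"])
    show "C2 \<subseteq> T2"
    proof
      fix c assume "c \<in> C2"
      then have "c + 0 *\<^sub>R disp (X1, True) \<in> T2" by (rule C2_seg[OF _ rangeI])
      then show "c \<in> T2" by (simp add: zero_prod_def[symmetric])
    qed
  qed (auto intro: C2_step C2_seg)
qed

lemma gauss_iff: "z \<in> gauss_ints \<longleftrightarrow> Re z \<in> \<int> \<and> Im z \<in> \<int>"
  by (simp add: gauss_ints_def)

lemma base_C2: "px \<in> gauss_ints \<Longrightarrow> py \<in> gauss_ints \<Longrightarrow> base_pt px py \<in> C2"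
  by (simp add: base_pt_def C2_def on_def gauss_iff)

lemma word_path_T2: "px \<in> gauss_ints \<Longrightarrow> py \<in> gauss_ints \<Longrightarrow> path_image (word_path (base_pt px py) w) \<subseteq> T2"
  unfolding word_path_lp by (rule tr2.img[OF base_C2]) auto



definition u12 :: "nat \<Rightarrow> complex" where "u12 n = (if n = 1 then 1 else \<i>)"
definition fx :: "nat letter \<Rightarrow> complex" where "fx a = u12 (fst a) * sgnb (snd a)"
definition fy :: "nat letter \<Rightarrow> complex" where "fy a = - (u12 (fst a) * sgnb (snd a))"

lemma fx_inv: "fx (n, \<not> e) = - fx (n, e)" by (simp add: fx_def)
lemma fy_inv: "fy (n, \<not> e) = - fy (n, e)" by (simp add: fy_def)
lemma fx_V1: "fx a \<in> V1" by (auto simp: fx_def u12_def sgnb_V1)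
lemma fy_V1: "fy a \<in> V1" by (auto simp: fy_def u12_def sgnb_V1)

lemma u12_nz[simp]: "u12 n \<noteq> 0" by (simp add: u12_def)

lemma L1: "filter (\<lambda>v. v \<noteq> 0) (map (\<lambda>a. fst (disp a)) w) = map fx (comp_a w)"
proof (induction w)
  case (Cons a w)
  obtain g e where a: "a = (g, e)" by (cases a)
  show ?case using Cons by (cases g) (simp_all add: a comp_a_def fx_def u12_def)
qed (simp add: comp_a_def)

lemma L2: "filter (\<lambda>v. v \<noteq> 0) (map (\<lambda>a. snd (disp a)) w) = map fy (comp_b w)"
proof (induction w)
  case (Cons a w)
  obtain g e where a: "a = (g, e)" by (cases a)
  show ?case using Cons by (cases g) (simp_all add: a comp_b_def fy_def u12_def)
qed (simp add: comp_b_def)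

lemma L3: "map (\<lambda>a. fst (disp a) - snd (disp a)) w = map fy (comp_c w)"
proof (induction w)
  case (Cons a w)
  obtain g e where a: "a = (g, e)" by (cases a)
  show ?case using Cons by (cases g) (simp_all add: a comp_c_def fy_def u12_def)
qed (simp add: comp_c_def)

lemma sum_free_reduce:
  fixes f :: "'c letter \<Rightarrow> 'v::ab_group_add"
  assumes finv: "\<And>a e. f (a, \<not> e) = - f (a, e)"
  shows "sum_list (map f (free_reduce u)) = sum_list (map f u)"
proof (induction u)
  case (Cons x xs)
  show ?case
  proof (cases "free_reduce xs")
    case Nil then show ?thesis using Cons by simp
  next
    case (Cons y ys)
    show ?thesis
    proof (cases "fst y = fst x \<and> snd y \<noteq> snd x")
      case True
      then have "y = (fst x, \<not> snd x)" by (cases y) auto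
      then have fy: "f y = - f x" using finv[of "fst x" "snd x"] by simp
      have fr: "free_reduce (x # xs) = ys" using \<open>free_reduce xs = y # ys\<close> True by simp
      have "sum_list (map f xs) = - f x + sum_list (map f ys)"
        using Cons.IH \<open>free_reduce xs = y # ys\<close> fy by simp
      then show ?thesis unfolding fr by simp
    next
      case False
      then have "free_reduce (x # xs) = x # y # ys" using \<open>free_reduce xs = y # ys\<close> by simp
      then show ?thesis using Cons.IH \<open>free_reduce xs = y # ys\<close> by simp
    qed
  qed
qed simp

lemma sum_filter_nz: "sum_list (filter (\<lambda>v. v \<noteq> 0) xs) = sum_list xs"
  by (induction xs) simp_all

lemma fst_sum_list: "fst (sum_list xs) = sum_list (map fst xs)"
  by (induction xs) simp_all
lemma snd_sum_list: "snd (sum_list xs) = sum_list (map snd xs)"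
  by (induction xs) simp_all

lemma inT_sum: assumes "in_T w" shows "sum_list (map disp w) = 0"
proof -
  have "fst (sum_list (map disp w)) = sum_list (filter (\<lambda>v. v \<noteq> 0) (map (\<lambda>a. fst (disp a)) w))"
    by (simp add: fst_sum_list sum_filter_nz o_def)
  also have "\<dots> = sum_list (map fx (free_reduce (comp_a w)))"
    by (simp add: L1 sum_free_reduce[OF fx_inv])
  also have "\<dots> = 0" using assms by (simp add: in_T_def)
  finally have 1: "fst (sum_list (map disp w)) = 0" .
  have "snd (sum_list (map disp w)) = sum_list (filter (\<lambda>v. v \<noteq> 0) (map (\<lambda>a. snd (disp a)) w))"
    by (simp add: snd_sum_list sum_filter_nz o_def)
  also have "\<dots> = sum_list (map fy (free_reduce (comp_b w)))"
    by (simp add: L2 sum_free_reduce[OF fy_inv])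
  also have "\<dots> = 0" using assms by (simp add: in_T_def)
  finally have 2: "snd (sum_list (map disp w)) = 0" .
  show ?thesis using 1 2 by (simp add: prod_eq_iff)
qed

lemma NX:
  assumes "in_T w" "on (1/3) b"
  shows "homotopic_paths (Collect (tr (1/3))) (lp b (map (\<lambda>a. fst (disp a)) w)) (\<lambda>_. b)"
proof -
  have sV: "set (map (\<lambda>a. fst (disp a)) w) \<subseteq> V1" using disp_cases by (auto simp: V1_def)
  have "homotopic_paths (Collect (tr (1/3))) (lp b (map (\<lambda>a. fst (disp a)) w)) (lp b (map fx (comp_a w)))"
    using tr1.zero_remove[where a = "1/3" and b = b and vs = "map (\<lambda>a. fst (disp a)) w"] assms sV by (simp add: L1)
  also have "homotopic_paths (Collect (tr (1/3))) \<dots> (lp b (map fx (free_reduce (comp_a w))))"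
    using tr1.reduce[where f = fx and a = "1/3" and b = b and u = "comp_a w"] fx_V1 fx_inv assms by simp
  also have "lp b (map fx (free_reduce (comp_a w))) = (\<lambda>_. b)" using assms by (simp add: in_T_def)
  finally show ?thesis .
qed

lemma NY:
  assumes "in_T w" "on (-1/3) b"
  shows "homotopic_paths (Collect (tr (-1/3))) (lp b (map (\<lambda>a. snd (disp a)) w)) (\<lambda>_. b)"
proof -
  have sV: "set (map (\<lambda>a. snd (disp a)) w) \<subseteq> V1" using disp_cases by (auto simp: V1_def)
  have "homotopic_paths (Collect (tr (-1/3))) (lp b (map (\<lambda>a. snd (disp a)) w)) (lp b (map fy (comp_b w)))"
    using tr1.zero_remove[where a = "-1/3" and b = b and vs = "map (\<lambda>a. snd (disp a)) w"] assms sV by (simp add: L2)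
  also have "homotopic_paths (Collect (tr (-1/3))) \<dots> (lp b (map fy (free_reduce (comp_b w))))"
    using tr1.reduce[where f = fy and a = "-1/3" and b = b and u = "comp_b w"] fy_V1 fy_inv assms by simp
  also have "lp b (map fy (free_reduce (comp_b w))) = (\<lambda>_. b)" using assms by (simp add: in_T_def)
  finally show ?thesis .
qed

lemma ND:
  assumes "in_T w" "on (2/3) b"
  shows "homotopic_paths (Collect (tr (2/3))) (lp b (map (\<lambda>a. fst (disp a) - snd (disp a)) w)) (\<lambda>_. b)"
proof -
  have "homotopic_paths (Collect (tr (2/3))) (lp b (map fy (comp_c w))) (lp b (map fy (free_reduce (comp_c w))))"
    using tr1.reduce[where f = fy and a = "2/3" and b = b and u = "comp_c w"] fy_V1 fy_inv assms by simp
  also have "lp b (map fy (free_reduce (comp_c w))) = (\<lambda>_. b)" using assms by (simp add: in_T_def)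
  finally show ?thesis by (simp add: L3)
qed



lemma disp_fst_norm: "norm (fst (disp a)) \<le> 1"
  using disp_cases[of a] V1_norm by auto
lemma disp_snd_norm: "norm (snd (disp a)) \<le> 1"
  using disp_cases[of a] V1_norm by auto
lemma disp_dif_norm: "norm (fst (disp a) - snd (disp a)) \<le> 1"
  using disp_cases[of a] V1_norm by auto

locale setting =
  fixes w :: word and b :: "complex \<times> complex" and R :: real
  assumes inT: "in_T w" and bC: "b \<in> C2" and R: "R = real (length w) + 1"
begin

abbreviation "bX \<equiv> fst b"
abbreviation "bY \<equiv> snd b"
definition "\<gamma> = lp b (map disp w)"
definition "lx = lp bX (map (\<lambda>a. fst (disp a)) w)"
definition "ly = lp bY (map (\<lambda>a. snd (disp a)) w)"

lemma onx: "on (1/3) bX" using bC by (simp add: C2_def)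
lemma ony: "on (-1/3) bY" using bC by (simp add: C2_def)

lemma fst_\<gamma>: "fst (\<gamma> t) = lx t"
  unfolding \<gamma>_def lx_def lp_fst by (simp add: o_def)
lemma snd_\<gamma>: "snd (\<gamma> t) = ly t"
  unfolding \<gamma>_def ly_def lp_snd by (simp add: o_def)

lemma sum0: "sum_list (map disp w) = 0" by (rule inT_sum[OF inT])

lemma sumx: "sum_list (map (\<lambda>a. fst (disp a)) w) = 0"
  using sum0 fst_sum_list[of "map disp w"] by (simp add: o_def)
lemma sumy: "sum_list (map (\<lambda>a. snd (disp a)) w) = 0"
  using sum0 snd_sum_list[of "map disp w"] by (simp add: o_def)

lemma \<gamma>_path: "path \<gamma>" by (simp add: \<gamma>_def)
lemma \<gamma>_start: "pathstart \<gamma> = b" by (simp add: \<gamma>_def)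
lemma \<gamma>_finish: "pathfinish \<gamma> = b" by (simp add: \<gamma>_def sum0)
lemma \<gamma>_T2: "t \<in> {0..1} \<Longrightarrow> \<gamma> t \<in> T2"
proof -
  assume t: "t \<in> {0..1}"
  have "path_image (lp b (map disp w)) \<subseteq> T2" by (rule tr2.img[OF bC]) auto
  then show ?thesis using t by (auto simp: \<gamma>_def path_image_def)
qed

lemma \<gamma>_conf: "t \<in> {0..1} \<Longrightarrow> lx t \<noteq> 0 \<and> ly t \<noteq> 0 \<and> lx t \<noteq> ly t"
  using \<gamma>_T2[of t] fst_\<gamma>[of t] snd_\<gamma>[of t] by (cases "\<gamma> t") (auto simp: conf2_def)

lemma lx_bound: "t \<in> {0..1} \<Longrightarrow> norm (lx t - bX) \<le> R"
proof -
  assume t: "t \<in> {0..1}"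
  have "norm (lx t - bX) \<le> real (length (map (\<lambda>a. fst (disp a)) w))"
    unfolding lx_def by (rule lp_norm_bound) (use disp_fst_norm t in auto)
  then show ?thesis using R by simp
qed
lemma ly_bound: "t \<in> {0..1} \<Longrightarrow> norm (ly t - bY) \<le> R"
proof -
  assume t: "t \<in> {0..1}"
  have "norm (ly t - bY) \<le> real (length (map (\<lambda>a. snd (disp a)) w))"
    unfolding ly_def by (rule lp_norm_bound) (use disp_snd_norm t in auto)
  then show ?thesis using R by simp
qed

lemma lx_path: "path lx" by (simp add: lx_def)
lemma ly_path: "path ly" by (simp add: ly_def)

lemma word_path_eq: "word_path b w = \<gamma>" by (simp add: word_path_lp \<gamma>_def)

lemma caseA:
  assumes n1: "norm bX > R" and n2: "norm (bX - bY) > 2 * R"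
  shows "homotopic_paths T2 \<gamma> (\<lambda>_. b)"
proof -
  define h where "h = (\<lambda>t. (bX, ly t))"
  have hp: "path h" using ly_path unfolding h_def path_def by (intro continuous_intros) auto
  have "homotopic_paths T2 \<gamma> h"
  proof (rule homotopic_paths_linear[OF \<gamma>_path hp])
    show "pathstart h = pathstart \<gamma>" using \<gamma>_start by (simp add: h_def pathstart_def ly_def)
    show "pathfinish h = pathfinish \<gamma>" using \<gamma>_finish by (simp add: h_def pathfinish_def ly_def lp_finish sumy)
    fix t :: real assume t: "t \<in> {0..1}"
    show "closed_segment (\<gamma> t) (h t) \<subseteq> T2"
    proof
      fix p assume "p \<in> closed_segment (\<gamma> t) (h t)"
      then obtain u where u: "0 \<le> u" "u \<le> 1" "p = (1 - u) *\<^sub>R \<gamma> t + u *\<^sub>R h t"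
        by (auto simp: closed_segment_def)
      let ?x = "lx t" and ?y = "ly t"
      have "fst p = (1 - u) *\<^sub>R fst (\<gamma> t) + u *\<^sub>R fst (h t)" "snd p = (1 - u) *\<^sub>R snd (\<gamma> t) + u *\<^sub>R snd (h t)"
        using u(3) by simp_all
      then have ps: "fst p = (1 - u) *\<^sub>R ?x + u *\<^sub>R bX" "snd p = ?y"
        unfolding fst_\<gamma> snd_\<gamma> h_def by (simp_all add: algebra_simps)
      have "fst p - bX = (1 - u) *\<^sub>R (?x - bX)" using ps by (simp add: algebra_simps)
      then have "norm (fst p - bX) = (1 - u) * norm (?x - bX)" using u by simp
      also have "\<dots> \<le> 1 * R" using u lx_bound[OF t] by (intro mult_mono) auto
      finally have pb: "norm (fst p - bX) \<le> R" by simp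
      have yb: "norm (?y - bY) \<le> R" using ly_bound[OF t] .
      have f0: "fst p \<noteq> 0"
      proof
        assume "fst p = 0" then show False using pb n1 by simp
      qed
      have fy: "fst p \<noteq> snd p"
      proof
        assume e: "fst p = snd p"
        have "norm (bX - bY) \<le> norm (bX - fst p) + norm (snd p - bY)"
          using e norm_triangle_ineq[of "bX - fst p" "snd p - bY"] by simp
        also have "\<dots> \<le> 2 * R" using pb yb ps(2) by (simp add: norm_minus_commute)
        finally show False using n2 by simp
      qed
      show "p \<in> T2" using f0 fy \<gamma>_conf[OF t] ps(2) by (cases p) (auto simp: conf2_def)
    qed
  qed
  also have "homotopic_paths T2 h (\<lambda>_. b)"
  proof -
    have "homotopic_paths T2 ((\<lambda>z. (bX, z)) \<circ> ly) ((\<lambda>z. (bX, z)) \<circ> (\<lambda>_. bY))"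
    proof (rule homotopic_paths_continuous_image)
      show "homotopic_paths (Collect (tr (-1/3))) ly (\<lambda>_. bY)" unfolding ly_def by (rule NY[OF inT ony])
      show "continuous_on (Collect (tr (-1/3))) (\<lambda>z. (bX, z))" by (intro continuous_intros)
      show "(\<lambda>z. (bX, z)) \<in> Collect (tr (-1/3)) \<rightarrow> T2"
      proof
        fix z assume z: "z \<in> Collect (tr (-1/3))"
        have "z \<noteq> 0" using tr_nz[of "-1/3" z] z third_not_int by auto
        moreover have "bX \<noteq> 0" using tr_nz[OF on_tr[OF onx]] third_not_int by auto
        moreover have "bX \<noteq> z"
        proof
          assume e: "bX = z"
          have "tr (-1/3) bX" using z e by simp
          from on_tr_diff[OF onx this] have "1/3 - (-1/3) \<in> (\<int>::real set)" .
          then show False using third_not_int by simp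
        qed
        ultimately show "(bX, z) \<in> T2" by (simp add: conf2_def)
      qed
    qed
    then show ?thesis by (simp add: h_def o_def)
  qed
  finally show ?thesis .
qed

end



context setting begin

lemma caseA':
  assumes n1: "norm bY > R" and n2: "norm (bX - bY) > 2 * R"
  shows "homotopic_paths T2 \<gamma> (\<lambda>_. b)"
proof -
  define h where "h = (\<lambda>t. (lx t, bY))"
  have hp: "path h" using lx_path unfolding h_def path_def by (intro continuous_intros) auto
  have "homotopic_paths T2 \<gamma> h"
  proof (rule homotopic_paths_linear[OF \<gamma>_path hp])
    show "pathstart h = pathstart \<gamma>" using \<gamma>_start by (simp add: h_def pathstart_def lx_def)
    show "pathfinish h = pathfinish \<gamma>" using \<gamma>_finish by (simp add: h_def pathfinish_def lx_def lp_finish sumx)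
    fix t :: real assume t: "t \<in> {0..1}"
    show "closed_segment (\<gamma> t) (h t) \<subseteq> T2"
    proof
      fix p assume "p \<in> closed_segment (\<gamma> t) (h t)"
      then obtain u where u: "0 \<le> u" "u \<le> 1" "p = (1 - u) *\<^sub>R \<gamma> t + u *\<^sub>R h t"
        by (auto simp: closed_segment_def)
      let ?x = "lx t" and ?y = "ly t"
      have "fst p = (1 - u) *\<^sub>R fst (\<gamma> t) + u *\<^sub>R fst (h t)" "snd p = (1 - u) *\<^sub>R snd (\<gamma> t) + u *\<^sub>R snd (h t)"
        using u(3) by simp_all
      then have ps: "snd p = (1 - u) *\<^sub>R ?y + u *\<^sub>R bY" "fst p = ?x"
        unfolding fst_\<gamma> snd_\<gamma> h_def by (simp_all add: algebra_simps)
      have "snd p - bY = (1 - u) *\<^sub>R (?y - bY)" using ps by (simp add: algebra_simps)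
      then have "norm (snd p - bY) = (1 - u) * norm (?y - bY)" using u by simp
      also have "\<dots> \<le> 1 * R" using u ly_bound[OF t] by (intro mult_mono) auto
      finally have pb: "norm (snd p - bY) \<le> R" by simp
      have xb: "norm (?x - bX) \<le> R" using lx_bound[OF t] .
      have f0: "snd p \<noteq> 0"
      proof
        assume "snd p = 0" then show False using pb n1 by simp
      qed
      have fy: "fst p \<noteq> snd p"
      proof
        assume e: "fst p = snd p"
        have "norm (bX - bY) \<le> norm (bX - fst p) + norm (snd p - bY)"
          using e norm_triangle_ineq[of "bX - fst p" "snd p - bY"] by simp
        also have "\<dots> \<le> 2 * R" using pb xb ps(2) by (simp add: norm_minus_commute)
        finally show False using n2 by simp
      qed
      show "p \<in> T2" using f0 fy \<gamma>_conf[OF t] ps(2) by (cases p) (auto simp: conf2_def)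
    qed
  qed
  also have "homotopic_paths T2 h (\<lambda>_. b)"
  proof -
    have "homotopic_paths T2 ((\<lambda>z. (z, bY)) \<circ> lx) ((\<lambda>z. (z, bY)) \<circ> (\<lambda>_. bX))"
    proof (rule homotopic_paths_continuous_image)
      show "homotopic_paths (Collect (tr (1/3))) lx (\<lambda>_. bX)" unfolding lx_def by (rule NX[OF inT onx])
      show "continuous_on (Collect (tr (1/3))) (\<lambda>z. (z, bY))" by (intro continuous_intros)
      show "(\<lambda>z. (z, bY)) \<in> Collect (tr (1/3)) \<rightarrow> T2"
      proof
        fix z assume z: "z \<in> Collect (tr (1/3))"
        have "z \<noteq> 0" using tr_nz[of "1/3" z] z third_not_int by auto
        moreover have "bY \<noteq> 0" using tr_nz[OF on_tr[OF ony]] third_not_int by auto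
        moreover have "z \<noteq> bY"
        proof
          assume e: "z = bY"
          have "tr (1/3) bY" using z e by simp
          from on_tr_diff[OF ony this] have "-1/3 - 1/3 \<in> (\<int>::real set)" .
          then show False using third_not_int by simp
        qed
        ultimately show "(z, bY) \<in> T2" by (simp add: conf2_def)
      qed
    qed
    then show ?thesis by (simp add: h_def o_def)
  qed
  finally show ?thesis .
qed

lemma convex_norm:
  fixes A B :: "'a::real_normed_vector"
  assumes "norm A \<le> r" "norm B \<le> r" "0 \<le> u" "u \<le> 1"
  shows "norm ((1 - u) *\<^sub>R A + u *\<^sub>R B) \<le> r"
proof -
  have "norm ((1 - u) *\<^sub>R A + u *\<^sub>R B) \<le> (1 - u) * norm A + u * norm B"
    using norm_triangle_ineq[of "(1 - u) *\<^sub>R A" "u *\<^sub>R B"] assms by simp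
  also have "\<dots> \<le> (1 - u) * r + u * r" using assms by (intro add_mono mult_left_mono) auto
  finally show ?thesis by (simp add: algebra_simps)
qed

lemma half_norm:
  fixes A B :: "'a::real_normed_vector"
  assumes "norm A \<le> r" "norm B \<le> r"
  shows "norm ((1/2) *\<^sub>R (A - B)) \<le> r"
proof -
  have "norm (A - B) \<le> norm A + norm B" by (rule norm_triangle_ineq4)
  then show ?thesis using assms by simp
qed

definition "ld = lp (bX - bY) (map (\<lambda>a. fst (disp a) - snd (disp a)) w)"

lemma ld_eq: "ld t = lx t - ly t"
  using lp_dif[of b "map disp w" t] fst_\<gamma>[of t] snd_\<gamma>[of t] by (simp add: ld_def \<gamma>_def o_def)

lemma ld_bound: "t \<in> {0..1} \<Longrightarrow> norm (ld t - (bX - bY)) \<le> R"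
proof -
  assume t: "t \<in> {0..1}"
  have "norm (ld t - (bX - bY)) \<le> real (length (map (\<lambda>a. fst (disp a) - snd (disp a)) w))"
    unfolding ld_def by (rule lp_norm_bound) (use disp_dif_norm t in auto)
  then show ?thesis using R by simp
qed

lemma ond: "on (2/3) (bX - bY)"
proof -
  have a: "Re bX + 1/3 \<in> \<int>" "Im bX + 1/3 \<in> \<int>" "Re bY + -1/3 \<in> \<int>" "Im bY + -1/3 \<in> \<int>"
    using onx ony by (auto simp: on_def)
  have "Re (bX - bY) + 2/3 = (Re bX + 1/3) - (Re bY + -1/3)" "Im (bX - bY) + 2/3 = (Im bX + 1/3) - (Im bY + -1/3)"
    by simp_all
  then show ?thesis using a unfolding on_def by (metis Ints_diff)
qed

lemma caseB:
  assumes n1: "norm bX > R" and n2: "norm bY > R" and n3: "norm (bX + bY) > norm (bX - bY) + R"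
  shows "homotopic_paths T2 \<gamma> (\<lambda>_. b)"
proof -
  define d0 where "d0 = bX - bY"
  define c0 where "c0 = (bX + bY) / 2"
  define M where "M = norm d0 + R"
  have R0: "R > 0" using R by simp
  have M0: "M > 0" using R0 by (simp add: M_def add_nonneg_pos)
  define rr where "rr = (\<lambda>z::complex. (M / max M (norm z)) *\<^sub>R z)"
  define \<phi> where "\<phi> = (\<lambda>z. (c0 + rr z / 2, c0 - rr z / 2))"
  have rr_id: "rr z = z" if "norm z \<le> M" for z
    using that M0 by (simp add: rr_def max_def)
  have rr_norm: "norm (rr z) \<le> M" for z
  proof (cases "norm z \<le> M")
    case True then show ?thesis using rr_id by simp
  next
    case False
    then have "rr z = (M / norm z) *\<^sub>R z" by (simp add: rr_def max_def)
    then show ?thesis using False M0 by simp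
  qed
  have rr_nz: "rr z \<noteq> 0" if "z \<noteq> 0" for z
    using that M0 by (simp add: rr_def)
  have cont_rr: "continuous_on UNIV rr"
    unfolding rr_def using M0 by (intro continuous_intros) auto
  have cont_\<phi>: "continuous_on UNIV \<phi>"
    unfolding \<phi>_def by (intro continuous_intros continuous_on_compose2[OF cont_rr]) auto
  have ldb: "norm (ld t) \<le> M" if "t \<in> {0..1}" for t
  proof -
    have "norm (ld t) \<le> norm (ld t - d0) + norm d0" using norm_triangle_sub[of "ld t" d0] by simp
    then show ?thesis using ld_bound[OF that] by (simp add: M_def d0_def)
  qed
  have \<phi>d0: "\<phi> d0 = b"
  proof -
    have "rr d0 = d0" using rr_id R0 by (simp add: M_def)
    then have "\<phi> d0 = (c0 + d0 / 2, c0 - d0 / 2)" by (simp add: \<phi>_def)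
    also have "\<dots> = (bX, bY)" unfolding c0_def d0_def by (simp add: field_simps)
    finally show ?thesis by simp
  qed
  define h where "h = \<phi> \<circ> ld"
  have ldp: "path ld" by (simp add: ld_def)
  have hp: "path h" unfolding h_def
    by (rule path_continuous_image[OF ldp]) (rule continuous_on_subset[OF cont_\<phi>], simp)
  have ht: "h t = (c0 + ld t / 2, c0 - ld t / 2)" if "t \<in> {0..1}" for t
    using rr_id[OF ldb[OF that]] by (simp add: h_def \<phi>_def)
  have "homotopic_paths T2 \<gamma> h"
  proof (rule homotopic_paths_linear[OF \<gamma>_path hp])
    show "pathstart h = pathstart \<gamma>" using \<gamma>_start \<phi>d0 by (simp add: h_def pathstart_def ld_def d0_def)
    show "pathfinish h = pathfinish \<gamma>" using \<gamma>_finish \<phi>d0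
      by (simp add: h_def pathfinish_def ld_def lp_finish d0_def sum_list_subtractf sumx sumy)
    fix t :: real assume t: "t \<in> {0..1}"
    show "closed_segment (\<gamma> t) (h t) \<subseteq> T2"
    proof
      fix p assume "p \<in> closed_segment (\<gamma> t) (h t)"
      then obtain u where u: "0 \<le> u" "u \<le> 1" "p = (1 - u) *\<^sub>R \<gamma> t + u *\<^sub>R h t"
        by (auto simp: closed_segment_def)
      let ?x = "lx t" and ?y = "ly t"
      have "fst p = (1 - u) *\<^sub>R fst (\<gamma> t) + u *\<^sub>R fst (h t)" "snd p = (1 - u) *\<^sub>R snd (\<gamma> t) + u *\<^sub>R snd (h t)"
        using u(3) by simp_all
      then have ps: "fst p = (1 - u) *\<^sub>R ?x + u *\<^sub>R (c0 + (?x - ?y) / 2)"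
                    "snd p = (1 - u) *\<^sub>R ?y + u *\<^sub>R (c0 - (?x - ?y) / 2)"
        unfolding fst_\<gamma> snd_\<gamma> ht[OF t] ld_eq by simp_all
      have xb: "norm (?x - bX) \<le> R" using lx_bound[OF t] .
      have yb: "norm (?y - bY) \<le> R" using ly_bound[OF t] .
      have e1: "fst p - bX = (1 - u) *\<^sub>R (?x - bX) + u *\<^sub>R ((1/2) *\<^sub>R ((?x - bX) - (?y - bY)))"
        unfolding ps c0_def by (simp add: algebra_simps scaleR_conv_of_real) (simp add: field_simps)
      have e2: "snd p - bY = (1 - u) *\<^sub>R (?y - bY) + u *\<^sub>R ((1/2) *\<^sub>R ((?y - bY) - (?x - bX)))"
        unfolding ps c0_def by (simp add: algebra_simps scaleR_conv_of_real) (simp add: field_simps)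
      have pb1: "norm (fst p - bX) \<le> R" unfolding e1 by (intro convex_norm half_norm xb yb u(1,2))
      have pb2: "norm (snd p - bY) \<le> R" unfolding e2 by (intro convex_norm half_norm xb yb u(1,2))
      have f0: "fst p \<noteq> 0"
      proof
        assume "fst p = 0" then show False using pb1 n1 by simp
      qed
      have s0: "snd p \<noteq> 0"
      proof
        assume "snd p = 0" then show False using pb2 n2 by simp
      qed
      have "fst p - snd p = ?x - ?y" unfolding ps by (simp add: algebra_simps scaleR_conv_of_real)
      then have fs: "fst p \<noteq> snd p" using \<gamma>_conf[OF t] by auto
      show "p \<in> T2" using f0 s0 fs by (cases p) (auto simp: conf2_def)
    qed
  qed
  also have "homotopic_paths T2 h (\<lambda>_. b)"
  proof -
    have "homotopic_paths T2 (\<phi> \<circ> ld) (\<phi> \<circ> (\<lambda>_. d0))"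
    proof (rule homotopic_paths_continuous_image)
      show "homotopic_paths (Collect (tr (2/3))) ld (\<lambda>_. d0)" unfolding ld_def d0_def by (rule ND[OF inT ond])
      show "continuous_on (Collect (tr (2/3))) \<phi>" by (rule continuous_on_subset[OF cont_\<phi>]) simp
      show "\<phi> \<in> Collect (tr (2/3)) \<rightarrow> T2"
      proof
        fix z assume z: "z \<in> Collect (tr (2/3))"
        have "z \<noteq> 0" using tr_nz[of "2/3" z] z third_not_int by auto
        then have r0: "rr z \<noteq> 0" by (rule rr_nz)
        have c0M: "2 * norm c0 > M" using n3 by (simp add: c0_def M_def d0_def norm_divide)
        have a1: "c0 + rr z / 2 \<noteq> 0"
        proof
          assume "c0 + rr z / 2 = 0"
          then have "c0 = - (rr z / 2)" by (simp add: eq_neg_iff_add_eq_0)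
          then have "2 * norm c0 = norm (rr z)" by (simp add: norm_divide)
          then show False using c0M rr_norm[of z] by simp
        qed
        have a2: "c0 - rr z / 2 \<noteq> 0"
        proof
          assume "c0 - rr z / 2 = 0"
          then have "rr z = 2 * c0" by (simp add: mult.commute)
          then have "2 * norm c0 = norm (rr z)" by (simp add: norm_mult)
          then show False using c0M rr_norm[of z] by simp
        qed
        have a3: "c0 + rr z / 2 \<noteq> c0 - rr z / 2" using r0 by simp
        show "\<phi> z \<in> T2" using a1 a2 a3 by (simp add: \<phi>_def conf2_def)
      qed
    qed
    then show ?thesis using \<phi>d0 by (simp add: h_def o_def)
  qed
  finally show ?thesis .
qed

end



context setting begin

lemma trivial_far:
  assumes far: "\<not> (norm bX \<le> 5 * R \<and> norm bY \<le> 5 * R)"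
  shows "homotopic_paths T2 \<gamma> (\<lambda>_. b)"
proof -
  have t1: "norm bY \<le> norm bX + norm (bX - bY)" using norm_triangle_sub[of bY bX] by (simp add: norm_minus_commute)
  have t2: "norm bX \<le> norm bY + norm (bX - bY)" using norm_triangle_sub[of bX bY] by simp
  have "norm ((bX + bY) + (bX - bY)) \<le> norm (bX + bY) + norm (bX - bY)" by (rule norm_triangle_ineq)
  moreover have "(bX + bY) + (bX - bY) = 2 * bX" by simp
  ultimately have t3: "2 * norm bX \<le> norm (bX + bY) + norm (bX - bY)" by (simp add: norm_mult)
  have R0: "R > 0" using R by simp
  show ?thesis
  proof (cases "norm (bX - bY) > 2 * R")
    case True
    show ?thesis
    proof (cases "norm bX > R")
      case True then show ?thesis using caseA \<open>norm (bX - bY) > 2 * R\<close> by blast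
    next
      case False
      then have "norm bY > R" using far R0 by linarith
      then show ?thesis using caseA' \<open>norm (bX - bY) > 2 * R\<close> by blast
    qed
  next
    case False
    then have x: "norm bX > R" and y: "norm bY > R" using far t1 t2 R0 by linarith+
    show ?thesis
    proof (cases "norm (bX + bY) > norm (bX - bY) + R")
      case True then show ?thesis using caseB x y by blast
    next
      case False
      then show ?thesis using far t1 t2 t3 \<open>\<not> norm (bX - bY) > 2 * R\<close> R0 by linarith
    qed
  qed
qed

end

lemma kappa_norm: "norm (1/3 + \<i>/3 :: complex) \<le> 1"
proof -
  have "norm (1/3 + \<i>/3 :: complex) \<le> norm (1/3 :: complex) + norm (\<i>/3 :: complex)" by (rule norm_triangle_ineq)
  also have "\<dots> = 2/3" by (simp add: norm_divide)
  finally show ?thesis by simp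
qed

lemma gauss_ball_finite: "finite {z. z \<in> gauss_ints \<and> norm z \<le> K}"
proof -
  define k where "k = \<lceil>K\<rceil>"
  have "{z. z \<in> gauss_ints \<and> norm z \<le> K} \<subseteq> (\<lambda>(a, b). Complex (of_int a) (of_int b)) ` ({-k..k} \<times> {-k..k})"
  proof
    fix z assume z: "z \<in> {z. z \<in> gauss_ints \<and> norm z \<le> K}"
    then obtain a b where ab: "Re z = of_int a" "Im z = of_int b" by (auto simp: gauss_iff elim!: Ints_cases)
    have "\<bar>Re z\<bar> \<le> K" "\<bar>Im z\<bar> \<le> K" using z abs_Re_le_cmod[of z] abs_Im_le_cmod[of z] by auto
    then have "\<bar>of_int a\<bar> \<le> K" "\<bar>of_int b\<bar> \<le> (K::real)" using ab by auto
    then have "a \<in> {-k..k}" "b \<in> {-k..k}" unfolding k_def by (auto simp: abs_le_iff; linarith)+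
    moreover have "z = Complex (of_int a) (of_int b)" using ab by (simp add: complex_eq_iff)
    ultimately show "z \<in> (\<lambda>(a, b). Complex (of_int a) (of_int b)) ` ({-k..k} \<times> {-k..k})" by force
  qed
  then show ?thesis by (rule finite_subset) simp
qed

lemma I_finite:
  assumes inT: "in_T w"
  shows "finite (I_set w)"
proof -
  define R where "R = real (length w) + 1"
  define A where "A = {z. z \<in> gauss_ints \<and> norm z \<le> 5 * R + 1}"
  have "I_set w \<subseteq> A \<times> A"
  proof
    fix p assume p: "p \<in> I_set w"
    obtain px py where pp: "p = (px, py)" by (cases p)
    have g: "px \<in> gauss_ints" "py \<in> gauss_ints" and nt: "I_nontrivial px py w" using p pp by (auto simp: I_set_def)
    let ?b = "base_pt px py"
    interpret s: setting w ?b R using inT base_C2[OF g] R_def by unfold_locales auto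
    have bd: "norm (fst ?b) \<le> 5 * R \<and> norm (snd ?b) \<le> 5 * R"
    proof (rule ccontr)
      assume "\<not> ?thesis"
      then have "homotopic_paths T2 s.\<gamma> (\<lambda>_. ?b)" by (rule s.trivial_far)
      then show False using nt by (simp add: I_nontrivial_def s.word_path_eq)
    qed
    have "norm px \<le> norm (fst ?b) + norm (1/3 + \<i>/3 :: complex)"
      using norm_triangle_ineq[of "fst ?b" "1/3 + \<i>/3"] by (simp add: base_pt_def)
    moreover have "norm py \<le> norm (snd ?b) + norm (1/3 + \<i>/3 :: complex)"
      using norm_triangle_ineq4[of "snd ?b" "1/3 + \<i>/3"] by (simp add: base_pt_def)
    ultimately have "norm px \<le> 5 * R + 1" "norm py \<le> 5 * R + 1" using bd kappa_norm by linarith+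
    then show "p \<in> A \<times> A" using g pp by (simp add: A_def)
  qed
  moreover have "finite (A \<times> A)" using gauss_ball_finite unfolding A_def by simp
  ultimately show ?thesis by (rule finite_subset)
qed



lemma lpT2: "px \<in> gauss_ints \<Longrightarrow> py \<in> gauss_ints \<Longrightarrow> path_image (lp (base_pt px py) (map disp w)) \<subseteq> T2"
  by (rule tr2.img[OF base_C2]) auto

lemma join_trivial:
  assumes "in_T w1" "px \<in> gauss_ints" "py \<in> gauss_ints"
    "\<not> I_nontrivial px py w1" "\<not> I_nontrivial px py w2"
  shows "\<not> I_nontrivial px py (w1 @ w2)"
proof -
  let ?b = "base_pt px py"
  have i: "path_image (lp ?b (map disp w1 @ map disp w2)) \<subseteq> T2"
    using lpT2[OF assms(2,3), of "w1 @ w2"] by simp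
  have "homotopic_paths T2 (lp ?b (map disp w1 @ map disp w2)) (lp ?b (map disp w1) +++ lp ?b (map disp w2))"
    using lp_append_homotopic[OF i] inT_sum[OF assms(1)] by simp
  also have "homotopic_paths T2 \<dots> (linepath ?b ?b +++ linepath ?b ?b)"
    by (rule homotopic_paths_join) (use assms(4,5) inT_sum[OF assms(1)] in \<open>simp_all add: I_nontrivial_def word_path_lp linepath_refl\<close>)
  also have "homotopic_paths T2 \<dots> (linepath ?b ?b)"
    by (rule homotopic_paths_lid') (use tr2.CT[OF base_C2[OF assms(2,3)]] in simp_all)
  finally show ?thesis by (simp add: I_nontrivial_def word_path_lp linepath_refl)
qed

lemma disp_neg': "- disp x = disp (fst x, \<not> snd x)"
  by (metis disp_neg prod.collapse)

lemma map_disp_inv: "map disp (word_inv \<alpha>) = rev (map uminus (map disp \<alpha>))"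
  by (simp add: word_inv_def rev_map case_prod_beta disp_neg' o_def)

lemma base_shift: "base_pt px py - (dx, dy) = base_pt (px - dx) (py - dy)"
  by (simp add: base_pt_def algebra_simps)

lemma conj_iff:
  assumes inT: "in_T w1" and g: "px \<in> gauss_ints" "py \<in> gauss_ints"
    and gd: "fst (sum_list (map disp \<alpha>)) \<in> gauss_ints" "snd (sum_list (map disp \<alpha>)) \<in> gauss_ints"
  shows "I_nontrivial px py (word_inv \<alpha> @ w1 @ \<alpha>) \<longleftrightarrow>
         I_nontrivial (px - fst (sum_list (map disp \<alpha>))) (py - snd (sum_list (map disp \<alpha>))) w1"
proof -
  let ?A = "map disp \<alpha>" and ?W = "map disp w1"
  let ?b = "base_pt px py"
  let ?b' = "?b - sum_list ?A"
  have b'eq: "?b' = base_pt (px - fst (sum_list ?A)) (py - snd (sum_list ?A))"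
    using base_shift[of px py "fst (sum_list ?A)" "snd (sum_list ?A)"] by simp
  have g': "px - fst (sum_list ?A) \<in> gauss_ints" "py - snd (sum_list ?A) \<in> gauss_ints"
    using g gd by (auto simp: gauss_iff)
  have bC: "?b \<in> C2" using base_C2[OF g] .
  have b'C: "?b' \<in> C2" unfolding b'eq by (rule base_C2[OF g'])
  have sA: "sum_list (rev (map uminus ?A)) = - sum_list ?A" by (simp only: sum_list_rev tr2.sum_neg)
  define q where "q = lp ?b (rev (map uminus ?A))"
  define \<gamma> where "\<gamma> = lp ?b' ?W"
  have sV: "set (rev (map uminus ?A)) \<subseteq> range disp" "set ?A \<subseteq> range disp" "set ?W \<subseteq> range disp"
    by (auto simp: disp_neg')
  have qi: "path_image q \<subseteq> T2" unfolding q_def by (rule tr2.img[OF bC sV(1)])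
  have \<gamma>i: "path_image \<gamma> \<subseteq> T2" unfolding \<gamma>_def by (rule tr2.img[OF b'C sV(3)])
  have qf: "pathfinish q = ?b'" by (simp add: q_def sA tr2.sum_neg del: map_map)
  have \<gamma>f: "pathfinish \<gamma> = ?b'" by (simp add: \<gamma>_def inT_sum[OF inT])
  have full: "word_path ?b (word_inv \<alpha> @ w1 @ \<alpha>) = lp ?b (rev (map uminus ?A) @ ?W @ ?A)"
    by (simp add: word_path_lp map_disp_inv)
  have fi: "path_image (lp ?b (rev (map uminus ?A) @ ?W @ ?A)) \<subseteq> T2"
    by (rule tr2.img[OF bC]) (use sV in auto)
  have H1: "homotopic_paths T2 (lp ?b (rev (map uminus ?A) @ ?W @ ?A)) (q +++ (\<gamma> +++ reversepath q))"
  proof -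
    have "homotopic_paths T2 (lp ?b (rev (map uminus ?A) @ ?W @ ?A)) (q +++ lp ?b' (?W @ ?A))"
      using lp_append_homotopic[OF fi] by (simp add: q_def sA tr2.sum_neg del: map_map)
    also have "homotopic_paths T2 \<dots> (q +++ (\<gamma> +++ lp ?b' ?A))"
    proof (rule homotopic_paths_join)
      show "homotopic_paths T2 q q" using qi by (simp add: q_def)
      have "path_image (lp ?b' (?W @ ?A)) \<subseteq> T2" by (rule tr2.img[OF b'C]) (use sV in auto)
      from lp_append_homotopic[OF this]
      show "homotopic_paths T2 (lp ?b' (?W @ ?A)) (\<gamma> +++ lp ?b' ?A)"
        by (simp add: \<gamma>_def inT_sum[OF inT])
    qed (simp add: qf)
    also have "homotopic_paths T2 \<dots> (q +++ (\<gamma> +++ reversepath q))"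
    proof (rule homotopic_paths_join)
      show "homotopic_paths T2 q q" using qi by (simp add: q_def)
      show "homotopic_paths T2 (\<gamma> +++ lp ?b' ?A) (\<gamma> +++ reversepath q)"
      proof (rule homotopic_paths_join)
        show "homotopic_paths T2 \<gamma> \<gamma>" using \<gamma>i by (simp add: \<gamma>_def)
        have "homotopic_paths T2 q (reversepath (lp ?b' ?A))"
          unfolding q_def by (rule tr2.reverse[OF bC sV(2)])
        from homotopic_paths_reversepath_D[OF this]
        show "homotopic_paths T2 (lp ?b' ?A) (reversepath q)"
          by (simp add: homotopic_paths_sym)
      qed (simp add: \<gamma>_def inT_sum[OF inT])
    qed (simp add: qf \<gamma>_def)
    finally show ?thesis .
  qed
  have pq: "path q" "path \<gamma>" by (simp_all add: q_def \<gamma>_def)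
  have qs: "pathstart q = ?b" "pathstart \<gamma> = ?b'" by (simp_all add: q_def \<gamma>_def)
  have L1: "homotopic_loops T2 (q +++ (\<gamma> +++ reversepath q)) \<gamma>"
    by (rule homotopic_loops_conjugate[OF pq qi \<gamma>i]) (simp_all add: qf qs \<gamma>f)
  have L2: "homotopic_loops T2 (lp ?b (rev (map uminus ?A) @ ?W @ ?A)) (q +++ (\<gamma> +++ reversepath q))"
    by (rule homotopic_paths_imp_homotopic_loops[OF H1]) (simp_all add: qf qs \<gamma>f lp_finish inT_sum[OF inT] sA tr2.sum_neg del: map_map)
  have LL: "homotopic_loops T2 (lp ?b (rev (map uminus ?A) @ ?W @ ?A)) \<gamma>"
    by (rule homotopic_loops_trans[OF L2 L1])
  show ?thesis
  proof
    assume nt: "I_nontrivial px py (word_inv \<alpha> @ w1 @ \<alpha>)"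
    show "I_nontrivial (px - fst (sum_list ?A)) (py - snd (sum_list ?A)) w1"
      unfolding I_nontrivial_def
    proof
      assume h: "homotopic_paths T2 (word_path (base_pt (px - fst (sum_list ?A)) (py - snd (sum_list ?A))) w1)
        (\<lambda>_. base_pt (px - fst (sum_list ?A)) (py - snd (sum_list ?A)))"
      then have "homotopic_paths T2 \<gamma> (linepath ?b' ?b')"
        by (simp add: \<gamma>_def b'eq word_path_lp linepath_refl)
      then have "homotopic_loops T2 \<gamma> (linepath ?b' ?b')"
        by (rule homotopic_paths_imp_homotopic_loops) (simp_all add: \<gamma>f qs)
      then have "homotopic_loops T2 (lp ?b (rev (map uminus ?A) @ ?W @ ?A)) (linepath ?b' ?b')"
        by (rule homotopic_loops_trans[OF LL])
      from homotopic_loops_imp_homotopic_paths_null[OF this]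
      have "homotopic_paths T2 (word_path ?b (word_inv \<alpha> @ w1 @ \<alpha>)) (\<lambda>_. ?b)"
        by (simp add: full linepath_refl)
      then show False using nt by (simp add: I_nontrivial_def)
    qed
  next
    assume nt: "I_nontrivial (px - fst (sum_list ?A)) (py - snd (sum_list ?A)) w1"
    show "I_nontrivial px py (word_inv \<alpha> @ w1 @ \<alpha>)"
      unfolding I_nontrivial_def
    proof
      assume h: "homotopic_paths T2 (word_path ?b (word_inv \<alpha> @ w1 @ \<alpha>)) (\<lambda>_. ?b)"
      then have "homotopic_paths T2 (lp ?b (rev (map uminus ?A) @ ?W @ ?A)) (linepath ?b ?b)"
        by (simp add: full linepath_refl)
      then have "homotopic_loops T2 (lp ?b (rev (map uminus ?A) @ ?W @ ?A)) (linepath ?b ?b)"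
        by (rule homotopic_paths_imp_homotopic_loops) (simp_all add: lp_finish inT_sum[OF inT] sA tr2.sum_neg del: map_map)
      then have "homotopic_loops T2 \<gamma> (linepath ?b ?b)"
        by (rule homotopic_loops_trans[OF homotopic_loops_sym[OF LL]])
      from homotopic_loops_imp_homotopic_paths_null[OF this]
      have "homotopic_paths T2 \<gamma> (\<lambda>_. ?b')" by (simp add: qs linepath_refl)
      then show False using nt by (simp add: I_nontrivial_def b'eq \<gamma>_def word_path_lp)
    qed
  qed
qed



lemma gauss_V1: "c \<in> gauss_ints \<Longrightarrow> v \<in> V1 \<Longrightarrow> c + v \<in> gauss_ints"
  by (auto simp: V1_def gauss_iff)

lemma fst_disp_V1: "fst (disp a) \<in> V1" using disp_cases[of a] by (auto simp: V1_def)
lemma snd_disp_V1: "snd (disp a) \<in> V1" using disp_cases[of a] by (auto simp: V1_def)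

lemma gauss_sum:
  "fst (sum_list (map disp \<alpha>)) \<in> gauss_ints" "snd (sum_list (map disp \<alpha>)) \<in> gauss_ints"
proof -
  have z: "0 \<in> gauss_ints" by (simp add: gauss_iff)
  have "0 + sum_list (map (\<lambda>a. fst (disp a)) \<alpha>) \<in> gauss_ints"
    by (rule lp_vertex_C[of gauss_ints V1, OF gauss_V1 z]) (auto simp: fst_disp_V1)
  then show "fst (sum_list (map disp \<alpha>)) \<in> gauss_ints" by (simp add: fst_sum_list o_def)
  have "0 + sum_list (map (\<lambda>a. snd (disp a)) \<alpha>) \<in> gauss_ints"
    by (rule lp_vertex_C[of gauss_ints V1, OF gauss_V1 z]) (auto simp: snd_disp_V1)
  then show "snd (sum_list (map disp \<alpha>)) \<in> gauss_ints" by (simp add: snd_sum_list o_def)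
qed

theorem lemma4p13:
  fixes w1 w2 \<alpha> :: word
  assumes "in_T w1" and "in_T w2"
  shows "finite (I_set w1)
         \<and> braid_inv (word_inv \<alpha> @ w1 @ \<alpha>) = braid_inv w1
         \<and> braid_inv (w1 @ w2) \<le> braid_inv w1 + braid_inv w2"
proof (intro conjI)
  show f1: "finite (I_set w1)" by (rule I_finite[OF assms(1)])
  have f2: "finite (I_set w2)" by (rule I_finite[OF assms(2)])
  have sub: "I_set (w1 @ w2) \<subseteq> I_set w1 \<union> I_set w2"
    using join_trivial[OF assms(1)] by (auto simp: I_set_def)
  have "braid_inv (w1 @ w2) \<le> card (I_set w1 \<union> I_set w2)"
    unfolding braid_inv_def by (rule card_mono) (use f1 f2 sub in auto)
  also have "\<dots> \<le> braid_inv w1 + braid_inv w2" unfolding braid_inv_def by (rule card_Un_le)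
  finally show "braid_inv (w1 @ w2) \<le> braid_inv w1 + braid_inv w2" .
  define dx where "dx = fst (sum_list (map disp \<alpha>))"
  define dy where "dy = snd (sum_list (map disp \<alpha>))"
  have gd: "dx \<in> gauss_ints" "dy \<in> gauss_ints" using gauss_sum by (simp_all add: dx_def dy_def)
  define sh where "sh = (\<lambda>(px::complex, py::complex). (px + dx, py + dy))"
  have inj: "inj_on sh (I_set w1)" by (auto simp: sh_def inj_on_def)
  have eq: "I_set (word_inv \<alpha> @ w1 @ \<alpha>) = sh ` I_set w1"
  proof
    show "I_set (word_inv \<alpha> @ w1 @ \<alpha>) \<subseteq> sh ` I_set w1"
    proof
      fix p assume p: "p \<in> I_set (word_inv \<alpha> @ w1 @ \<alpha>)"
      obtain px py where pp: "p = (px, py)" by (cases p)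
      have g: "px \<in> gauss_ints" "py \<in> gauss_ints" and nt: "I_nontrivial px py (word_inv \<alpha> @ w1 @ \<alpha>)"
        using p pp by (auto simp: I_set_def)
      have "I_nontrivial (px - dx) (py - dy) w1"
        using conj_iff[OF assms(1) g gauss_sum] nt by (simp add: dx_def dy_def)
      moreover have "px - dx \<in> gauss_ints" "py - dy \<in> gauss_ints" using g gd by (auto simp: gauss_iff)
      ultimately have "(px - dx, py - dy) \<in> I_set w1" by (simp add: I_set_def)
      moreover have "p = sh (px - dx, py - dy)" by (simp add: sh_def pp)
      ultimately show "p \<in> sh ` I_set w1" by blast
    qed
    show "sh ` I_set w1 \<subseteq> I_set (word_inv \<alpha> @ w1 @ \<alpha>)"
    proof
      fix p assume "p \<in> sh ` I_set w1"
      then obtain qx qy where q: "(qx, qy) \<in> I_set w1" and pp: "p = (qx + dx, qy + dy)"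
        by (auto simp: sh_def)
      have g: "qx \<in> gauss_ints" "qy \<in> gauss_ints" and nt: "I_nontrivial qx qy w1"
        using q by (auto simp: I_set_def)
      have g': "qx + dx \<in> gauss_ints" "qy + dy \<in> gauss_ints" using g gd by (auto simp: gauss_iff)
      have "I_nontrivial (qx + dx) (qy + dy) (word_inv \<alpha> @ w1 @ \<alpha>)"
        using conj_iff[OF assms(1) g' gauss_sum] nt by (simp add: dx_def dy_def)
      then show "p \<in> I_set (word_inv \<alpha> @ w1 @ \<alpha>)" using g' pp by (simp add: I_set_def)
    qed
  qed
  show "braid_inv (word_inv \<alpha> @ w1 @ \<alpha>) = braid_inv w1"
    unfolding braid_inv_def eq by (rule card_image[OF inj])
qed


end
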